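(* For every pair of finite objects $(\widetilde X_1,\gamma_1,\omega_1,\mathfrak a_1)$ and $(\widetilde X_2,\gamma_2,\omega_2,\mathfrak a_2)$ of $\mathscr C_{d,k}$ there exists a finite link-connected object $(\widetilde Y,\gamma,\omega,\mathfrak a)$ of $\mathscr C_{d,k}$ together with surjective morphisms $\pi_i:(\widetilde Y,\gamma,\omega,\mathfrak a)\to(\widetilde X_i,\gamma_i,\omega_i,\mathfrak a_i)$ for $i=1,2$.
   Context: Fix $d,k\ge1$, $[\![d]\!]=\{0,\dots,d\}$. Multicomplexes: a $d$-multicomplex is a triple $\widetilde X=(X,\mathsf m,\mathsf g)$ where $X$ is a $d$-dimensional simplicial complex on a countable vertex set, $\mathsf m:X\to\mathbb N$ equals $1$ on the empty cell and on vertices, multicells are pairs $(\tau,r)$, $\tau\in X$, $1\le r\le\mathsf m(\tau)$ (dimension $\dim\tau$), and $\mathsf g$ assigns to each multicell $(\tau,r)$ and each codimension-one face $\sigma$ of $\tau$ a multicell $\mathsf g((\tau,r),\sigma)=(\sigma,s)$; containment $\preceq$ is the reflexive–transitive closure of "$\mathfrak b=\mathsf g(\mathfrak a,\sigma)$"; consistency: if $(\sigma,s),(\sigma',s')$ have equal dimension, lie in a common multicell, and $\rho=\sigma\cap\sigma'$ has codimension one in both, then $\mathsf g((\sigma,s),\rho)=\mathsf g((\sigma',s'),\rho)$. $\widetilde X$ is pure if every multicell lies in a $d$-multicell; two $d$-multicells are neighbors if they contain a common $(d-1)$-multicell; $d$-lower path connected means any two $d$-multicells are joined by a chain of neighbors.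 For a $(d-1)$-multicell $\mathfrak b$, $\delta(\mathfrak b)$ is the set of $d$-multicells containing it, $\deg\mathfrak b=|\delta(\mathfrak b)|$. $\widetilde X$ is link-connected if for every multicell $\mathfrak a$ of dimension $j\le d-2$ (including the empty one) the multigraph with vertices the $(j+1)$-multicells containing $\mathfrak a$ and edges the $(j+2)$-multicells containing $\mathfrak a$ is connected. A coloring is a map $\gamma$ from vertices to $[\![d]\!]$ injective on each $d$-cell, extended to cells and multicells by $\gamma(\sigma)=\{\gamma(v):v\in\sigma\}$. A $k$-ordering $\omega$ assigns to each $(d-1)$-multicell $\mathfrak b$ a homomorphism $\omega_{\mathfrak b}:\mathbb Z/k\mathbb Z\to\mathrm{Sym}(\delta(\mathfrak b))$ with transitive image. Objects of $\mathscr C_{d,k}$: quartets $(\widetilde X,\gamma,\omega,\mathfrak a_0)$ with $\widetilde X$ a pure, colorable, $d$-lower path connected $d$-multicomplex all of whose $(d-1)$-multicells have degree $\le k$, $\gamma$ a coloring, $\omega$ a $k$-ordering, $\mathfrak a_0$ a $d$-multicell. Morphisms: maps $\widetilde\varphi$ on multicells lying over a simplicial map of the underlying complexes, commuting with gluing, preserving root, colors, and orderings ($\widetilde\varphi(\omega_{\mathfrak b}(l).\mathfrak a)=\widehat\omega_{\widetilde\varphi(\mathfrak b)}(l).\widetilde\varphi(\mathfrak a)$). An object is finite if it has finitely many multicells; a morphism is surjective if it is surjective on multicells. *)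

theory Defs
  imports Main
begin

text \<open>A cell is a finite set of
vertices; a multicell is a pair (tau, r) with 1 <= r <= mult tau. The gluing map returns
the index s of the multicell (sigma, s) = g((tau,r), sigma).\<close>

record mcomplex =
  cells :: "nat set set"
  mult  :: "nat set \<Rightarrow> nat"
  glue  :: "nat set \<times> nat \<Rightarrow> nat set \<Rightarrow> nat"

type_synonym mcell = "nat set \<times> nat"

definition simplicial_complex :: "nat \<Rightarrow> nat set set \<Rightarrow> bool" where
  "simplicial_complex d X \<longleftrightarrow>
     {} \<in> X \<and>
     (\<forall>\<tau>\<in>X. finite \<tau> \<and> card \<tau> \<le> d + 1 \<and> (\<forall>\<sigma>. \<sigma> \<subseteq> \<tau> \<longrightarrow> \<sigma> \<in> X)) \<and>
     (\<exists>\<tau>\<in>X. card \<tau> = d + 1)"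

definition face1 :: "nat set \<Rightarrow> nat set \<Rightarrow> bool" where
  "face1 \<sigma> \<tau> \<longleftrightarrow> finite \<tau> \<and> \<sigma> \<subseteq> \<tau> \<and> card \<sigma> + 1 = card \<tau>"

definition multicells :: "mcomplex \<Rightarrow> mcell set" where
  "multicells M = {(\<tau>, r). \<tau> \<in> cells M \<and> 1 \<le> r \<and> r \<le> mult M \<tau>}"

text \<open>multicells of dimension j, i.e. whose cell has j+1 vertices (indexed by card)\<close>
definition mcells_card :: "mcomplex \<Rightarrow> nat \<Rightarrow> mcell set" where
  "mcells_card M n = {a \<in> multicells M. card (fst a) = n}"

definition gstep :: "mcomplex \<Rightarrow> mcell \<Rightarrow> mcell \<Rightarrow> bool" where
  "gstep M b a \<longleftrightarrow> a \<in> multicells M \<and> (\<exists>\<sigma>. face1 \<sigma> (fst a) \<and> b = (\<sigma>, glue M a \<sigma>))"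

definition contained :: "mcomplex \<Rightarrow> mcell \<Rightarrow> mcell \<Rightarrow> bool" where
  "contained M b a \<longleftrightarrow> (gstep M)\<^sup>*\<^sup>* b a"

definition multicomplex :: "nat \<Rightarrow> mcomplex \<Rightarrow> bool" where
  "multicomplex d M \<longleftrightarrow>
     simplicial_complex d (cells M) \<and>
     mult M {} = 1 \<and>
     (\<forall>v. {v} \<in> cells M \<longrightarrow> mult M {v} = 1) \<and>
     (\<forall>\<tau>\<in>cells M. 1 \<le> mult M \<tau>) \<and>
     (\<forall>a\<in>multicells M. \<forall>\<sigma>. face1 \<sigma> (fst a) \<longrightarrow>
         1 \<le> glue M a \<sigma> \<and> glue M a \<sigma> \<le> mult M \<sigma>) \<and>
     (\<forall>s1\<in>multicells M. \<forall>s2\<in>multicells M. \<forall>c\<in>multicells M.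
         card (fst s1) = card (fst s2) \<and> contained M s1 c \<and> contained M s2 c \<and>
         face1 (fst s1 \<inter> fst s2) (fst s1) \<and> face1 (fst s1 \<inter> fst s2) (fst s2) \<longrightarrow>
         glue M s1 (fst s1 \<inter> fst s2) = glue M s2 (fst s1 \<inter> fst s2))"

definition pure :: "nat \<Rightarrow> mcomplex \<Rightarrow> bool" where
  "pure d M \<longleftrightarrow> (\<forall>a\<in>multicells M. \<exists>c\<in>mcells_card M (d + 1). contained M a c)"

definition neighbors :: "nat \<Rightarrow> mcomplex \<Rightarrow> mcell \<Rightarrow> mcell \<Rightarrow> bool" where
  "neighbors d M a a' \<longleftrightarrow> a \<in> mcells_card M (d + 1) \<and> a' \<in> mcells_card M (d + 1) \<and>
     (\<exists>b\<in>mcells_card M d. contained M b a \<and> contained M b a')"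

definition lower_path_connected :: "nat \<Rightarrow> mcomplex \<Rightarrow> bool" where
  "lower_path_connected d M \<longleftrightarrow>
     (\<forall>a\<in>mcells_card M (d + 1). \<forall>a'\<in>mcells_card M (d + 1). (neighbors d M)\<^sup>*\<^sup>* a a')"

definition delta :: "nat \<Rightarrow> mcomplex \<Rightarrow> mcell \<Rightarrow> mcell set" where
  "delta d M b = {a \<in> mcells_card M (d + 1). contained M b a}"

definition degree_bounded :: "nat \<Rightarrow> nat \<Rightarrow> mcomplex \<Rightarrow> bool" where
  "degree_bounded d k M \<longleftrightarrow>
     (\<forall>b\<in>mcells_card M d. finite (delta d M b) \<and> card (delta d M b) \<le> k)"

text \<open>link graph of a multicell a: vertices are the multicells one dimension higher
containing a, edges the multicells two dimensions higher containing a; an edge c is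
incident to a vertex b iff b is contained in c.\<close>
definition link_vertices :: "mcomplex \<Rightarrow> mcell \<Rightarrow> mcell set" where
  "link_vertices M a = {b \<in> mcells_card M (card (fst a) + 1). contained M a b}"

definition link_adj :: "mcomplex \<Rightarrow> mcell \<Rightarrow> mcell \<Rightarrow> mcell \<Rightarrow> bool" where
  "link_adj M a b b' \<longleftrightarrow> b \<in> link_vertices M a \<and> b' \<in> link_vertices M a \<and>
     (\<exists>c\<in>mcells_card M (card (fst a) + 2).
        contained M a c \<and> contained M b c \<and> contained M b' c)"

definition link_connected :: "nat \<Rightarrow> mcomplex \<Rightarrow> bool" where
  "link_connected d M \<longleftrightarrow>
     (\<forall>a\<in>multicells M. card (fst a) + 1 \<le> d \<longrightarrow>
        (\<forall>b\<in>link_vertices M a. \<forall>b'\<in>link_vertices M a. (link_adj M a)\<^sup>*\<^sup>* b b'))"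

definition coloring :: "nat \<Rightarrow> mcomplex \<Rightarrow> (nat \<Rightarrow> nat) \<Rightarrow> bool" where
  "coloring d M \<gamma> \<longleftrightarrow>
     (\<forall>v. {v} \<in> cells M \<longrightarrow> \<gamma> v \<le> d) \<and>
     (\<forall>\<tau>\<in>cells M. card \<tau> = d + 1 \<longrightarrow> inj_on \<gamma> \<tau>)"

definition colorable :: "nat \<Rightarrow> mcomplex \<Rightarrow> bool" where
  "colorable d M \<longleftrightarrow> (\<exists>\<gamma>. coloring d M \<gamma>)"

text \<open>k-ordering: for each (d-1)-multicell b, l \<mapsto> omega b l (l < k, read as residues mod k)
is a homomorphism Z/kZ \<rightarrow> Sym(delta b) with transitive image.\<close>
definition k_ordering :: "nat \<Rightarrow> nat \<Rightarrow> mcomplex \<Rightarrow> (mcell \<Rightarrow> nat \<Rightarrow> mcell \<Rightarrow> mcell) \<Rightarrow> bool" where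
  "k_ordering d k M \<omega> \<longleftrightarrow>
     (\<forall>b\<in>mcells_card M d.
        (\<forall>l<k. bij_betw (\<omega> b l) (delta d M b) (delta d M b)) \<and>
        (\<forall>x\<in>delta d M b. \<omega> b 0 x = x) \<and>
        (\<forall>l<k. \<forall>l'<k. \<forall>x\<in>delta d M b. \<omega> b ((l + l') mod k) x = \<omega> b l (\<omega> b l' x)) \<and>
        (\<forall>x\<in>delta d M b. \<forall>y\<in>delta d M b. \<exists>l<k. \<omega> b l x = y))"

definition obj :: "nat \<Rightarrow> nat \<Rightarrow> mcomplex \<Rightarrow> (nat \<Rightarrow> nat) \<Rightarrow>
    (mcell \<Rightarrow> nat \<Rightarrow> mcell \<Rightarrow> mcell) \<Rightarrow> mcell \<Rightarrow> bool" where
  "obj d k M \<gamma> \<omega> a0 \<longleftrightarrow>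
     multicomplex d M \<and> pure d M \<and> colorable d M \<and> lower_path_connected d M \<and>
     degree_bounded d k M \<and> coloring d M \<gamma> \<and> k_ordering d k M \<omega> \<and>
     a0 \<in> mcells_card M (d + 1)"

definition morphism :: "nat \<Rightarrow> nat \<Rightarrow>
    mcomplex \<Rightarrow> (nat \<Rightarrow> nat) \<Rightarrow> (mcell \<Rightarrow> nat \<Rightarrow> mcell \<Rightarrow> mcell) \<Rightarrow> mcell \<Rightarrow>
    mcomplex \<Rightarrow> (nat \<Rightarrow> nat) \<Rightarrow> (mcell \<Rightarrow> nat \<Rightarrow> mcell \<Rightarrow> mcell) \<Rightarrow> mcell \<Rightarrow>
    (mcell \<Rightarrow> mcell) \<Rightarrow> bool" where
  "morphism d k M1 \<gamma>1 \<omega>1 a1 M2 \<gamma>2 \<omega>2 a2 \<phi> \<longleftrightarrow>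
     (\<forall>a\<in>multicells M1. \<phi> a \<in> multicells M2) \<and>
     (\<exists>f :: nat \<Rightarrow> nat.
        (\<forall>\<tau>\<in>cells M1. f ` \<tau> \<in> cells M2) \<and>
        (\<forall>a\<in>multicells M1. fst (\<phi> a) = f ` fst a) \<and>
        (\<forall>a\<in>multicells M1. \<forall>\<sigma>. face1 \<sigma> (fst a) \<longrightarrow>
            \<phi> (\<sigma>, glue M1 a \<sigma>) = (f ` \<sigma>, glue M2 (\<phi> a) (f ` \<sigma>)))) \<and>
     \<phi> a1 = a2 \<and>
     (\<forall>a\<in>multicells M1. \<gamma>2 ` fst (\<phi> a) = \<gamma>1 ` fst a) \<and>
     (\<forall>b\<in>mcells_card M1 d. \<forall>a\<in>delta d M1 b. \<forall>l<k.
        \<phi> (\<omega>1 b l a) = \<omega>2 (\<phi> b) l (\<phi> a))"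

definition surjective_morphism :: "mcomplex \<Rightarrow> mcomplex \<Rightarrow> (mcell \<Rightarrow> mcell) \<Rightarrow> bool" where
  "surjective_morphism M1 M2 \<phi> \<longleftrightarrow> \<phi> ` multicells M1 = multicells M2"

end

theory Submission
  imports Defs "HOL-Library.Nat_Bijection"
begin


locale xobj =
  fixes d k :: nat and X :: mcomplex and \<gamma> :: "nat \<Rightarrow> nat"
    and \<omega> :: "mcell \<Rightarrow> nat \<Rightarrow> mcell \<Rightarrow> mcell" and a0 :: mcell
  assumes d1: "1 \<le> d" and k1: "1 \<le> k" and ob: "obj d k X \<gamma> \<omega> a0"
begin

lemma mc: "multicomplex d X" and pu: "pure d X" and lpc: "lower_path_connected d X"
  and col: "coloring d X \<gamma>" and ko: "k_ordering d k X \<omega>" and a0C: "a0 \<in> mcells_card X (d+1)"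
  using ob unfolding obj_def by auto

lemma sc: "simplicial_complex d (cells X)" using mc unfolding multicomplex_def by auto

lemma cell_sub: "\<tau> \<in> cells X \<Longrightarrow> \<sigma> \<subseteq> \<tau> \<Longrightarrow> \<sigma> \<in> cells X"
  using sc unfolding simplicial_complex_def by blast

lemma cell_fin: "\<tau> \<in> cells X \<Longrightarrow> finite \<tau>"
  using sc unfolding simplicial_complex_def by blast

lemma gstep_mc:
  assumes "gstep X b a"
  shows "a \<in> multicells X \<and> b \<in> multicells X \<and> fst b \<subseteq> fst a \<and> card (fst b) + 1 = card (fst a)"
proof -
  from assms obtain \<sigma> where a: "a \<in> multicells X" and f: "face1 \<sigma> (fst a)" and b: "b = (\<sigma>, glue X a \<sigma>)"
    unfolding gstep_def by auto
  have "fst a \<in> cells X" using a unfolding multicells_def by auto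
  hence "\<sigma> \<in> cells X" using f cell_sub unfolding face1_def by auto
  moreover have "1 \<le> glue X a \<sigma> \<and> glue X a \<sigma> \<le> mult X \<sigma>" using mc a f unfolding multicomplex_def by auto
  ultimately have "b \<in> multicells X" using b unfolding multicells_def by auto
  thus ?thesis using a f b unfolding face1_def by auto
qed

lemma contained_mc:
  assumes "contained X b a" "a \<in> multicells X"
  shows "b \<in> multicells X \<and> fst b \<subseteq> fst a \<and> card (fst b) \<le> card (fst a) \<and>
    (card (fst b) = card (fst a) \<longrightarrow> b = a)"
  using assms(1)[unfolded contained_def] assms(2)
proof (induction rule: converse_rtranclp_induct)
  case base
  then show ?case by auto
next
  case (step y z)
  from gstep_mc[OF step(1)] step(3,4) show ?case by auto
qed

lemma contained_trans: "contained X a b \<Longrightarrow> contained X b c \<Longrightarrow> contained X a c"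
  unfolding contained_def by auto

lemma gstep_contained: "gstep X b a \<Longrightarrow> contained X b a"
  unfolding contained_def by auto

lemma contained_exists:
  assumes "a \<in> multicells X" "\<sigma> \<subseteq> fst a"
  shows "\<exists>s. contained X (\<sigma>, s) a"
proof -
  have "\<forall>a. a \<in> multicells X \<longrightarrow> \<sigma> \<subseteq> fst a \<longrightarrow> card (fst a - \<sigma>) = n \<longrightarrow> (\<exists>s. contained X (\<sigma>, s) a)" for n
  proof (induction n)
    case 0
    show ?case
    proof (intro allI impI)
      fix a assume a: "a \<in> multicells X" "\<sigma> \<subseteq> fst a" "card (fst a - \<sigma>) = 0"
      have "finite (fst a)" using a cell_fin unfolding multicells_def by auto
      hence "fst a = \<sigma>" using a by auto
      hence "(\<sigma>, snd a) = a" by auto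
      hence "contained X (\<sigma>, snd a) a" unfolding contained_def by simp
      thus "\<exists>s. contained X (\<sigma>, s) a" by blast
    qed
  next
    case (Suc n)
    show ?case
    proof (intro allI impI)
      fix a assume a: "a \<in> multicells X" "\<sigma> \<subseteq> fst a" "card (fst a - \<sigma>) = Suc n"
      have fa: "finite (fst a)" using a cell_fin unfolding multicells_def by auto
      obtain v where v: "v \<in> fst a - \<sigma>" using a(3) by (metis card.empty ex_in_conv nat.distinct(1))
      let ?\<tau> = "fst a - {v}"
      have "card ?\<tau> + 1 = card (fst a)" proof -
        have "card (fst a) > 0" using v fa card_gt_0_iff by blast
        thus ?thesis using v fa by (simp add: card_Diff_singleton)
      qed
      hence f1: "face1 ?\<tau> (fst a)" using fa unfolding face1_def by auto
      let ?a' = "(?\<tau>, glue X a ?\<tau>)"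
      have g: "gstep X ?a' a" using a f1 unfolding gstep_def by auto
      have a'm: "?a' \<in> multicells X" using gstep_mc[OF g] by auto
      have "card (fst ?a' - \<sigma>) = n"
      proof -
        have "fst a - \<sigma> = insert v (fst ?a' - \<sigma>)" "v \<notin> fst ?a' - \<sigma>" using v by auto
        moreover have "finite (fst ?a' - \<sigma>)" using fa by auto
        ultimately have "card (fst a - \<sigma>) = Suc (card (fst ?a' - \<sigma>))" by (simp add: card_insert_disjoint)
        thus ?thesis using a(3) by simp
      qed
      moreover have "\<sigma> \<subseteq> fst ?a'" using a v by auto
      ultimately obtain s where "contained X (\<sigma>, s) ?a'" using Suc.IH a'm by blast
      thus "\<exists>s. contained X (\<sigma>, s) a" using contained_trans gstep_contained[OF g] by blast
    qed
  qed
  thus ?thesis using assms by blast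
qed

lemma first_step:
  assumes "contained X b a" "b \<noteq> a"
  shows "\<exists>\<tau>. face1 \<tau> (fst a) \<and> a \<in> multicells X \<and> contained X b (\<tau>, glue X a \<tau>)"
proof -
  from assms(1)[unfolded contained_def] assms(2) obtain y where "(gstep X)\<^sup>*\<^sup>* b y" "gstep X y a"
    by (metis rtranclp.cases)
  thus ?thesis unfolding gstep_def contained_def by auto
qed

lemma consist:
  assumes "s1 \<in> multicells X" "s2 \<in> multicells X" "c \<in> multicells X"
    "card (fst s1) = card (fst s2)" "contained X s1 c" "contained X s2 c"
    "face1 (fst s1 \<inter> fst s2) (fst s1)" "face1 (fst s1 \<inter> fst s2) (fst s2)"
  shows "glue X s1 (fst s1 \<inter> fst s2) = glue X s2 (fst s1 \<inter> fst s2)"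
proof -
  have "\<forall>s1\<in>multicells X. \<forall>s2\<in>multicells X. \<forall>c\<in>multicells X.
         card (fst s1) = card (fst s2) \<and> contained X s1 c \<and> contained X s2 c \<and>
         face1 (fst s1 \<inter> fst s2) (fst s1) \<and> face1 (fst s1 \<inter> fst s2) (fst s2) \<longrightarrow>
         glue X s1 (fst s1 \<inter> fst s2) = glue X s2 (fst s1 \<inter> fst s2)"
    using mc unfolding multicomplex_def by blast
  thus ?thesis using assms by blast
qed

lemma two_faces:
  assumes fa: "finite A" and t1: "face1 \<tau>1 A" and t2: "face1 \<tau>2 A" and ne: "\<tau>1 \<noteq> \<tau>2"
  shows "face1 (\<tau>1 \<inter> \<tau>2) \<tau>1 \<and> face1 (\<tau>1 \<inter> \<tau>2) \<tau>2"
proof -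
  have sub1: "\<tau>1 \<subseteq> A" "\<tau>2 \<subseteq> A" using t1 t2 unfolding face1_def by auto
  have ct1: "card \<tau>1 + 1 = card A" "card \<tau>2 + 1 = card A" using t1 t2 unfolding face1_def by auto
  have fin1: "finite \<tau>1" "finite \<tau>2" using sub1 fa finite_subset by auto
  have un: "\<tau>1 \<union> \<tau>2 = A"
  proof (rule ccontr)
    assume "\<tau>1 \<union> \<tau>2 \<noteq> A"
    hence "\<tau>1 \<union> \<tau>2 \<subset> A" using sub1 by auto
    hence "card (\<tau>1 \<union> \<tau>2) < card A" by (rule psubset_card_mono[OF fa])
    hence "card (\<tau>1 \<union> \<tau>2) \<le> card \<tau>1" using ct1 by linarith
    moreover have fu: "finite (\<tau>1 \<union> \<tau>2)" using fin1 by simp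
    moreover have "card \<tau>1 \<le> card (\<tau>1 \<union> \<tau>2)" by (rule card_mono[OF fu Un_upper1])
    ultimately have "card \<tau>1 = card (\<tau>1 \<union> \<tau>2)" by linarith
    hence "\<tau>1 = \<tau>1 \<union> \<tau>2" by (rule card_subset_eq[OF fu Un_upper1])
    hence "\<tau>2 \<subseteq> \<tau>1" by auto
    hence "\<tau>2 = \<tau>1" by (rule card_subset_eq[OF fin1(1)]) (use ct1 in simp)
    thus False using ne by auto
  qed
  have "card \<tau>1 + card \<tau>2 = card (\<tau>1 \<union> \<tau>2) + card (\<tau>1 \<inter> \<tau>2)" by (rule card_Un_Int[OF fin1])
  hence e: "card \<tau>1 + card \<tau>2 = card A + card (\<tau>1 \<inter> \<tau>2)" using un by simp
  have cr1: "card (\<tau>1 \<inter> \<tau>2) + 1 = card \<tau>1" using e ct1 by linarith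
  have cr2: "card (\<tau>1 \<inter> \<tau>2) + 1 = card \<tau>2" using e ct1 by linarith
  note cr = cr1 cr2
  thus ?thesis using fin1 unfolding face1_def by auto
qed

lemma contained_unique_aux:
  "\<forall>a \<sigma> s s'. card (fst a) = card \<sigma> + n \<longrightarrow> a \<in> multicells X \<longrightarrow> contained X (\<sigma>,s) a \<longrightarrow>
     contained X (\<sigma>,s') a \<longrightarrow> s = s'"
proof (induction n)
  case 0
  show ?case
  proof (intro allI impI)
    fix a \<sigma> s s' assume h: "card (fst a) = card \<sigma> + 0" "a \<in> multicells X" "contained X (\<sigma>,s) a"
      "contained X (\<sigma>,s') a"
    from contained_mc[OF h(3) h(2)] contained_mc[OF h(4) h(2)] h(1) show "s = s'" by auto
  qed
next
  case (Suc m)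
  have IH: "\<And>a \<sigma> s s'. card (fst a) = card \<sigma> + m \<Longrightarrow> a \<in> multicells X \<Longrightarrow> contained X (\<sigma>,s) a \<Longrightarrow>
     contained X (\<sigma>,s') a \<Longrightarrow> s = s'" using Suc.IH by blast
  show ?case
  proof (intro allI impI)
    fix a \<sigma> s s' assume h: "card (fst a) = card \<sigma> + Suc m" "a \<in> multicells X" "contained X (\<sigma>,s) a"
      "contained X (\<sigma>,s') a"
    have fa: "finite (fst a)" using h(2) cell_fin unfolding multicells_def by auto
    have ne1: "(\<sigma>,s) \<noteq> a" "(\<sigma>,s') \<noteq> a" using h(1) by auto
    obtain \<tau>1 where t1: "face1 \<tau>1 (fst a)" "contained X (\<sigma>,s) (\<tau>1, glue X a \<tau>1)"
      using first_step[OF h(3) ne1(1)] by blast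
    obtain \<tau>2 where t2: "face1 \<tau>2 (fst a)" "contained X (\<sigma>,s') (\<tau>2, glue X a \<tau>2)"
      using first_step[OF h(4) ne1(2)] by blast
    define c1 where "c1 = (\<tau>1, glue X a \<tau>1)"
    define c2 where "c2 = (\<tau>2, glue X a \<tau>2)"
    have t1c: "contained X (\<sigma>,s) c1" using t1 unfolding c1_def by simp
    have t2c: "contained X (\<sigma>,s') c2" using t2 unfolding c2_def by simp
    have fc1: "fst c1 = \<tau>1" and fc2: "fst c2 = \<tau>2" unfolding c1_def c2_def by simp_all
    have g1: "gstep X c1 a" using t1 h(2) unfolding c1_def gstep_def by auto
    have g2: "gstep X c2 a" using t2 h(2) unfolding c2_def gstep_def by auto
    have c1m: "c1 \<in> multicells X" and c2m: "c2 \<in> multicells X" using gstep_mc g1 g2 by auto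
    have cc1: "card (fst c1) = card \<sigma> + m" using t1 h(1) fc1 unfolding face1_def by auto
    have cc2: "card (fst c2) = card \<sigma> + m" using t2 h(1) fc2 unfolding face1_def by auto
    have s1: "\<sigma> \<subseteq> \<tau>1" using contained_mc[OF t1c c1m] fc1 by auto
    have s2: "\<sigma> \<subseteq> \<tau>2" using contained_mc[OF t2c c2m] fc2 by auto
    show "s = s'"
    proof (cases "\<tau>1 = \<tau>2")
      case True
      hence "c1 = c2" unfolding c1_def c2_def by simp
      then show ?thesis using IH[OF cc1 c1m t1c] t2c by simp
    next
      case False
      define \<rho> where "\<rho> = \<tau>1 \<inter> \<tau>2"
      have ff: "face1 (fst c1 \<inter> fst c2) (fst c1)" "face1 (fst c1 \<inter> fst c2) (fst c2)"
        using two_faces[OF fa t1(1) t2(1) False] fc1 fc2 by auto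
      have "card (fst c1) = card (fst c2)" using cc1 cc2 by auto
      from consist[OF c1m c2m h(2) this gstep_contained[OF g1] gstep_contained[OF g2] ff]
      have eqg: "glue X c1 \<rho> = glue X c2 \<rho>" unfolding \<rho>_def fc1 fc2 .
      define e where "e = (\<rho>, glue X c1 \<rho>)"
      have ge1: "gstep X e c1" using c1m ff(1) unfolding gstep_def e_def \<rho>_def fc1 fc2 by auto
      have ge2: "gstep X e c2" using c2m ff(2) eqg unfolding gstep_def e_def \<rho>_def fc1 fc2 by auto
      have em: "e \<in> multicells X" using gstep_mc ge1 by auto
      have "\<sigma> \<subseteq> fst e" using s1 s2 unfolding e_def \<rho>_def by auto
      then obtain t where t: "contained X (\<sigma>,t) e" using contained_exists em by blast
      have "s = t" using IH[OF cc1 c1m t1c contained_trans[OF t gstep_contained[OF ge1]]] .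
      moreover have "s' = t" using IH[OF cc2 c2m t2c contained_trans[OF t gstep_contained[OF ge2]]] .
      ultimately show ?thesis by auto
    qed
  qed
qed

lemma contained_unique:
  assumes "a \<in> multicells X" "contained X (\<sigma>,s) a" "contained X (\<sigma>,s') a"
  shows "s = s'"
proof -
  have "card \<sigma> \<le> card (fst a)" using contained_mc[OF assms(2,1)] by auto
  then obtain n where "card (fst a) = card \<sigma> + n" using le_Suc_ex by blast
  thus ?thesis using contained_unique_aux[of n] assms by blast
qed

definition face :: "mcell \<Rightarrow> nat set \<Rightarrow> mcell" where
  "face a \<sigma> = (\<sigma>, THE s. contained X (\<sigma>, s) a)"

lemma ex1_face: "a \<in> multicells X \<Longrightarrow> \<sigma> \<subseteq> fst a \<Longrightarrow> \<exists>!s. contained X (\<sigma>, s) a"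
  using contained_exists contained_unique by blast

lemma face_contained: "a \<in> multicells X \<Longrightarrow> \<sigma> \<subseteq> fst a \<Longrightarrow> contained X (face a \<sigma>) a"
  unfolding face_def by (rule theI'[OF ex1_face])

lemma face_unique: assumes "a \<in> multicells X" "contained X b a" shows "face a (fst b) = b"
proof -
  obtain \<sigma> s where b: "b = (\<sigma>, s)" by fastforce
  have "(THE s. contained X (\<sigma>, s) a) = s"
    by (rule the_equality) (use assms b contained_unique in auto)
  thus ?thesis unfolding face_def b by simp
qed

lemma fst_face[simp]: "fst (face a \<sigma>) = \<sigma>" unfolding face_def by auto

lemma face_mc: "a \<in> multicells X \<Longrightarrow> \<sigma> \<subseteq> fst a \<Longrightarrow> face a \<sigma> \<in> multicells X"
  using face_contained contained_mc by blast

lemma face_trans: assumes "a \<in> multicells X" "contained X b a" "\<sigma> \<subseteq> fst b"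
  shows "face b \<sigma> = face a \<sigma>"
proof -
  have bm: "b \<in> multicells X" using contained_mc assms by blast
  have "contained X (face b \<sigma>) a" using contained_trans face_contained[OF bm assms(3)] assms(2) by blast
  from face_unique[OF assms(1) this] show ?thesis by simp
qed

end



context xobj begin

abbreviation CH where "CH \<equiv> mcells_card X (d+1)"

lemma ch_mc: "c \<in> CH \<Longrightarrow> c \<in> multicells X \<and> card (fst c) = d+1 \<and> fst c \<in> cells X"
  unfolding mcells_card_def multicells_def by auto

lemma col_v: "v \<in> \<tau> \<Longrightarrow> \<tau> \<in> cells X \<Longrightarrow> \<gamma> v \<le> d"
proof -
  assume "v \<in> \<tau>" "\<tau> \<in> cells X"
  hence "{v} \<in> cells X" using cell_sub by blast
  thus ?thesis using col unfolding coloring_def by blast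
qed

lemma ch_inj: "c \<in> CH \<Longrightarrow> inj_on \<gamma> (fst c)"
  using col ch_mc unfolding coloring_def by blast

lemma ch_fin: "c \<in> CH \<Longrightarrow> finite (fst c)"
  using ch_mc cell_fin by blast

lemma ch_col: assumes "c \<in> CH" shows "\<gamma> ` fst c = {..d}"
proof -
  have s: "\<gamma> ` fst c \<subseteq> {..d}" using col_v ch_mc[OF assms] by auto
  have "card (\<gamma> ` fst c) = d + 1" using card_image[OF ch_inj[OF assms]] ch_mc[OF assms] by simp
  hence "card (\<gamma> ` fst c) = card {..d}" by simp
  thus ?thesis using card_subset_eq[OF _ s] by simp
qed

definition verts :: "mcell \<Rightarrow> nat set \<Rightarrow> nat set" where
  "verts c T = {v \<in> fst c. \<gamma> v \<in> T}"

lemma verts_sub: "verts c T \<subseteq> fst c" unfolding verts_def by auto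

lemma verts_col: assumes "c \<in> CH" shows "\<gamma> ` verts c T = T \<inter> {..d}"
proof -
  have "\<gamma> ` verts c T = \<gamma> ` fst c \<inter> T" unfolding verts_def by auto
  thus ?thesis using ch_col[OF assms] by auto
qed

lemma verts_card: assumes "c \<in> CH" shows "card (verts c T) = card (T \<inter> {..d})"
proof -
  have "inj_on \<gamma> (verts c T)" using ch_inj[OF assms] verts_sub inj_on_subset by blast
  hence "card (\<gamma> ` verts c T) = card (verts c T)" by (rule card_image)
  thus ?thesis using verts_col[OF assms] by simp
qed

lemma verts_all: assumes "c \<in> CH" shows "verts c {..d} = fst c"
  using ch_col[OF assms] unfolding verts_def by auto

lemma sub_verts: assumes "c \<in> CH" "\<sigma> \<subseteq> fst c" shows "verts c (\<gamma> ` \<sigma>) = \<sigma>"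
proof
  show "\<sigma> \<subseteq> verts c (\<gamma> ` \<sigma>)" using assms unfolding verts_def by auto
  show "verts c (\<gamma> ` \<sigma>) \<subseteq> \<sigma>"
  proof
    fix v assume "v \<in> verts c (\<gamma> ` \<sigma>)"
    then obtain u where u: "u \<in> \<sigma>" "\<gamma> v = \<gamma> u" "v \<in> fst c" unfolding verts_def by auto
    hence "v = u" using ch_inj[OF assms(1)] assms(2) unfolding inj_on_def by blast
    thus "v \<in> \<sigma>" using u by simp
  qed
qed

definition fc :: "mcell \<Rightarrow> nat set \<Rightarrow> mcell" where
  "fc c T = face c (verts c T)"

definition pan :: "nat \<Rightarrow> mcell \<Rightarrow> mcell" where
  "pan i c = fc c ({..d} - {i})"

lemma fc_contained: "c \<in> CH \<Longrightarrow> contained X (fc c T) c"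
  unfolding fc_def using face_contained ch_mc verts_sub by blast

lemma fc_mc: "c \<in> CH \<Longrightarrow> fc c T \<in> multicells X"
  using fc_contained contained_mc ch_mc by blast

lemma fst_fc[simp]: "fst (fc c T) = verts c T" unfolding fc_def by simp

lemma fc_all: assumes "c \<in> CH" shows "fc c {..d} = c"
proof -
  have "contained X c c" unfolding contained_def by simp
  from face_unique[OF _ this] ch_mc[OF assms] show ?thesis unfolding fc_def verts_all[OF assms] by simp
qed

lemma pan_mc: assumes "c \<in> CH" "i \<le> d" shows "pan i c \<in> mcells_card X d" "contained X (pan i c) c"
proof -
  have "card (fst (pan i c)) = d" unfolding pan_def fst_fc verts_card[OF assms(1)] using assms(2)
    by (simp add: Int_absorb2)
  thus "pan i c \<in> mcells_card X d" using fc_mc[OF assms(1)] unfolding pan_def mcells_card_def by simp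
  show "contained X (pan i c) c" unfolding pan_def by (rule fc_contained[OF assms(1)])
qed

lemma pan_eq:
  assumes c: "c \<in> CH" and b: "b \<in> mcells_card X d" and cb: "contained X b c"
    and g: "\<gamma> ` fst b = {..d} - {i}" and i: "i \<le> d"
  shows "fst b = verts c ({..d} - {i}) \<and> b = pan i c"
proof -
  have bs: "fst b \<subseteq> fst c" using contained_mc[OF cb] ch_mc[OF c] by blast
  have s: "fst b \<subseteq> verts c ({..d} - {i})" using bs g unfolding verts_def by auto
  have "card (verts c ({..d} - {i})) = d" using verts_card[OF c] i by (simp add: Int_absorb2)
  moreover have "card (fst b) = d" using b unfolding mcells_card_def by simp
  moreover have "finite (verts c ({..d} - {i}))" using ch_fin[OF c] verts_sub finite_subset by blast
  ultimately have e: "fst b = verts c ({..d} - {i})" using card_subset_eq s by metis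
  have "face c (fst b) = b" using face_unique cb ch_mc[OF c] by blast
  thus ?thesis using e unfolding pan_def fc_def by simp
qed

lemma panel_of:
  assumes c: "c \<in> CH" and b: "b \<in> mcells_card X d" and cb: "contained X b c"
  shows "\<exists>i\<le>d. \<gamma> ` fst b = {..d} - {i}"
proof -
  have bs: "fst b \<subseteq> fst c" using contained_mc[OF cb] ch_mc[OF c] by blast
  have cbd: "card (fst b) = d" using b unfolding mcells_card_def by simp
  have cc: "card (fst c) = d + 1" using ch_mc[OF c] by simp
  have "fst b \<noteq> fst c" using cbd cc by auto
  then obtain u where u: "u \<in> fst c" "u \<notin> fst b" using bs by blast
  have inj: "inj_on \<gamma> (fst c)" by (rule ch_inj[OF c])
  have "\<gamma> ` fst b \<subseteq> {..d} - {\<gamma> u}"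
  proof
    fix x assume "x \<in> \<gamma> ` fst b"
    then obtain v where v: "v \<in> fst b" "x = \<gamma> v" by blast
    have "x \<le> d" using v ch_col[OF c] bs by auto
    moreover have "v \<noteq> u" using u v by auto
    hence "x \<noteq> \<gamma> u" using inj v bs u unfolding inj_on_def by blast
    ultimately show "x \<in> {..d} - {\<gamma> u}" by auto
  qed
  moreover have "card (\<gamma> ` fst b) = d" using card_image[OF inj_on_subset[OF inj bs]] cbd by simp
  moreover have gu: "\<gamma> u \<le> d" using ch_col[OF c] u by auto
  moreover have "card ({..d} - {\<gamma> u}) = d" using gu by (simp add: card_Diff_singleton)
  ultimately have "\<gamma> ` fst b = {..d} - {\<gamma> u}" using card_subset_eq by (metis finite_Diff finite_atMost)
  thus ?thesis using gu by blast
qed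

definition act :: "nat \<Rightarrow> nat \<Rightarrow> mcell \<Rightarrow> mcell" where
  "act i l c = \<omega> (pan i c) l c"

lemma ko_b: assumes "b \<in> mcells_card X d"
  shows "(\<forall>l<k. bij_betw (\<omega> b l) (delta d X b) (delta d X b)) \<and>
        (\<forall>x\<in>delta d X b. \<omega> b 0 x = x) \<and>
        (\<forall>l<k. \<forall>l'<k. \<forall>x\<in>delta d X b. \<omega> b ((l + l') mod k) x = \<omega> b l (\<omega> b l' x)) \<and>
        (\<forall>x\<in>delta d X b. \<forall>y\<in>delta d X b. \<exists>l<k. \<omega> b l x = y)"
  using ko assms unfolding k_ordering_def by blast

lemma delta_iff: "a \<in> delta d X b \<longleftrightarrow> a \<in> CH \<and> contained X b a"
  unfolding delta_def by simp

lemma act_props: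
  assumes c: "c \<in> CH" and i: "i \<le> d" and l: "l < k"
  shows "act i l c \<in> CH \<and> pan i (act i l c) = pan i c"
proof -
  let ?b = "pan i c"
  have b: "?b \<in> mcells_card X d" and cb: "contained X ?b c" using pan_mc[OF c i] by auto
  have "c \<in> delta d X ?b" using c cb delta_iff by blast
  hence "act i l c \<in> delta d X ?b" using ko_b[OF b] l unfolding act_def bij_betw_def by blast
  hence a: "act i l c \<in> CH" "contained X ?b (act i l c)" using delta_iff by blast+
  have "\<gamma> ` fst ?b = {..d} - {i}" unfolding pan_def fst_fc verts_col[OF c] by auto
  from pan_eq[OF a(1) b a(2) this i] a(1) show ?thesis by simp
qed

lemma act_verts:
  assumes c: "c \<in> CH" and i: "i \<le> d" and l: "l < k" and T: "i \<notin> T"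
  shows "verts (act i l c) T = verts c T \<and> fc (act i l c) T = fc c T"
proof -
  let ?c' = "act i l c"
  have c': "?c' \<in> CH" and pe: "pan i ?c' = pan i c" using act_props[OF assms(1-3)] by auto
  have vv: "verts x T = {v \<in> verts x ({..d} - {i}). \<gamma> v \<in> T}" if "x \<in> CH" for x
    using col_v[of _ "fst x"] ch_mc[OF that] T unfolding verts_def by auto
  have fp: "verts ?c' ({..d} - {i}) = verts c ({..d} - {i})"
    using arg_cong[OF pe, of fst] unfolding pan_def fst_fc .
  have v: "verts ?c' T = verts c T" using vv[OF c'] vv[OF c] fp by simp
  have sub: "verts c T \<subseteq> fst (pan i c)" unfolding pan_def fst_fc verts_def using T col_v[of _ "fst c"] ch_mc[OF c] by auto
  have "fc c T = face (pan i c) (verts c T)"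
    unfolding fc_def using face_trans[OF _ pan_mc(2)[OF c i] sub] ch_mc[OF c] by simp
  moreover have "fc ?c' T = face (pan i ?c') (verts ?c' T)"
    unfolding fc_def using face_trans[OF _ pan_mc(2)[OF c' i]] ch_mc[OF c'] sub pe v by simp
  ultimately show ?thesis using v pe by simp
qed

lemma act_0: assumes c: "c \<in> CH" and i: "i \<le> d" shows "act i 0 c = c"
proof -
  have "c \<in> delta d X (pan i c)" using c pan_mc[OF c i] delta_iff by blast
  thus ?thesis using ko_b[OF pan_mc(1)[OF c i]] unfolding act_def by blast
qed

lemma act_comp: assumes c: "c \<in> CH" and i: "i \<le> d" and l: "l < k" and l': "l' < k"
  shows "act i ((l + l') mod k) c = act i l (act i l' c)"
proof -
  have "c \<in> delta d X (pan i c)" using c pan_mc[OF c i] delta_iff by blast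
  hence "\<omega> (pan i c) ((l + l') mod k) c = \<omega> (pan i c) l (\<omega> (pan i c) l' c)"
    using ko_b[OF pan_mc(1)[OF c i]] l l' by blast
  thus ?thesis unfolding act_def using act_props[OF c i l'] unfolding act_def by simp
qed

lemma act_inv: assumes c: "c \<in> CH" and i: "i \<le> d" and l: "l < k"
  shows "act i ((k - l) mod k) (act i l c) = c"
proof -
  have m: "(k - l) mod k < k" using l by simp
  have "((k - l) mod k + l) mod k = 0" using l by (simp add: mod_add_left_eq)
  hence "act i 0 c = act i ((k - l) mod k) (act i l c)" using act_comp[OF c i m l] by simp
  thus ?thesis using act_0[OF c i] by simp
qed

lemma neighbors_act:
  assumes "neighbors d X c c'" shows "c \<in> CH \<and> c' \<in> CH \<and> (\<exists>i\<le>d. \<exists>l<k. c' = act i l c)"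
proof -
  from assms obtain b where c: "c \<in> CH" and c': "c' \<in> CH" and b: "b \<in> mcells_card X d"
    and cb: "contained X b c" and cb': "contained X b c'" unfolding neighbors_def by blast
  obtain i where i: "i \<le> d" "\<gamma> ` fst b = {..d} - {i}" using panel_of[OF c b cb] by blast
  have bp: "b = pan i c" using pan_eq[OF c b cb i(2) i(1)] by blast
  have "c \<in> delta d X b" "c' \<in> delta d X b" using c c' cb cb' delta_iff by blast+
  then obtain l where "l < k" "\<omega> b l c = c'" using ko_b[OF b] by blast
  thus ?thesis using c c' i bp unfolding act_def by blast
qed

end



locale gset =
  fixes d k :: nat and P :: "'c set" and st :: "nat \<Rightarrow> nat \<Rightarrow> 'c \<Rightarrow> 'c" and c0 :: 'c
  assumes d1: "1 \<le> d" and k1: "1 \<le> k" and finP: "finite P" and c0P: "c0 \<in> P"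
    and stP: "\<And>i l x. i \<le> d \<Longrightarrow> l < k \<Longrightarrow> x \<in> P \<Longrightarrow> st i l x \<in> P"
    and st0: "\<And>i x. i \<le> d \<Longrightarrow> x \<in> P \<Longrightarrow> st i 0 x = x"
    and stc: "\<And>i l l' x. i \<le> d \<Longrightarrow> l < k \<Longrightarrow> l' < k \<Longrightarrow> x \<in> P \<Longrightarrow>
               st i ((l + l') mod k) x = st i l (st i l' x)"
    and conn: "\<And>x. x \<in> P \<Longrightarrow> (\<lambda>x y. \<exists>i\<in>{..d}. \<exists>l<k. y = st i l x)\<^sup>*\<^sup>* c0 x"
begin

definition stJ :: "nat set \<Rightarrow> 'c \<Rightarrow> 'c \<Rightarrow> bool" where
  "stJ J x y \<longleftrightarrow> (\<exists>i\<in>J. \<exists>l<k. y = st i l x)"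

definition rel :: "nat set \<Rightarrow> 'c \<Rightarrow> 'c \<Rightarrow> bool" where
  "rel J = (stJ J)\<^sup>*\<^sup>*"

definition res :: "nat set \<Rightarrow> 'c \<Rightarrow> 'c set" where
  "res J c = {y. rel J c y}"

lemma st_inv: assumes "i \<le> d" "l < k" "x \<in> P" shows "st i ((k - l) mod k) (st i l x) = x"
proof -
  have m: "(k - l) mod k < k" using assms(2) by simp
  have "((k - l) mod k + l) mod k = 0" using assms(2) by (simp add: mod_add_left_eq)
  hence "st i 0 x = st i ((k - l) mod k) (st i l x)" using stc[OF assms(1) m assms(2,3)] by simp
  thus ?thesis using st0[OF assms(1,3)] by simp
qed

lemma stJ_P: "J \<subseteq> {..d} \<Longrightarrow> x \<in> P \<Longrightarrow> stJ J x y \<Longrightarrow> y \<in> P"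
  unfolding stJ_def using stP by blast

lemma rel_P: assumes "J \<subseteq> {..d}" "rel J x y" "x \<in> P" shows "y \<in> P"
  using assms(2)[unfolded rel_def] assms(3)
  by (induction rule: rtranclp_induct) (use stJ_P[OF assms(1)] in blast)+

lemma stJ_sym: assumes "J \<subseteq> {..d}" "x \<in> P" "stJ J x y" shows "stJ J y x"
proof -
  obtain i l where il: "i \<in> J" "l < k" "y = st i l x" using assms(3) unfolding stJ_def by blast
  have "i \<le> d" using il assms(1) by auto
  hence "x = st i ((k - l) mod k) y" using st_inv il assms(2) by simp
  moreover have "(k - l) mod k < k" using il by simp
  ultimately show ?thesis using il unfolding stJ_def by blast
qed

lemma rel_trans: "rel J x y \<Longrightarrow> rel J y z \<Longrightarrow> rel J x z"
  unfolding rel_def by simp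

lemma rel_refl[simp]: "rel J x x" unfolding rel_def by simp

lemma rel_sym: assumes "J \<subseteq> {..d}" "rel J x y" "x \<in> P" shows "rel J y x"
  using assms(2)[unfolded rel_def] assms(3)
proof (induction rule: rtranclp_induct)
  case base then show ?case by simp
next
  case (step y z)
  have yP: "y \<in> P" using rel_P[OF assms(1)] step(1,4) unfolding rel_def by blast
  have "stJ J z y" using stJ_sym[OF assms(1) yP step(2)] .
  hence "rel J z y" unfolding rel_def by simp
  thus ?case using step(3,4) rel_trans by blast
qed

lemma stJ_mono: "J \<subseteq> J' \<Longrightarrow> stJ J x y \<Longrightarrow> stJ J' x y" unfolding stJ_def by blast

lemma rel_mono: assumes "J \<subseteq> J'" "rel J x y" shows "rel J' x y"
proof -
  have "(stJ J)\<^sup>*\<^sup>* x y" using assms(2) unfolding rel_def .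
  hence "(stJ J')\<^sup>*\<^sup>* x y" by (rule rtranclp_mono[THEN predicate2D, rotated]) (use stJ_mono[OF assms(1)] in blast)
  thus ?thesis unfolding rel_def .
qed

lemma rel_empty: "rel {} x y \<Longrightarrow> x = y"
proof -
  assume "rel {} x y"
  hence "(stJ {})\<^sup>*\<^sup>* x y" unfolding rel_def .
  thus ?thesis by (induction rule: rtranclp_induct) (auto simp: stJ_def)
qed

lemma st_rel: "i \<in> J \<Longrightarrow> l < k \<Longrightarrow> rel J x (st i l x)"
  unfolding rel_def stJ_def by (intro r_into_rtranclp) blast

lemma res_eq: assumes "J \<subseteq> {..d}" "x \<in> P" "rel J x y" shows "res J y = res J x"
  unfolding res_def using rel_sym[OF assms(1,3,2)] assms rel_trans by blast

lemma res_sub: "J \<subseteq> {..d} \<Longrightarrow> x \<in> P \<Longrightarrow> res J x \<subseteq> P"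
  unfolding res_def using rel_P by blast

lemma allP: assumes "x \<in> P" "y \<in> P" shows "rel {..d} x y"
proof -
  have e: "stJ {..d} = (\<lambda>x y. \<exists>i\<in>{..d}. \<exists>l<k. y = st i l x)" unfolding stJ_def by (intro ext) simp
  have "rel {..d} c0 x" "rel {..d} c0 y" unfolding rel_def e using conn assms by auto
  thus ?thesis using rel_sym c0P rel_trans by blast
qed

lemma rel_single: assumes "i \<le> d" "x \<in> P" "rel {i} x y" shows "\<exists>l<k. y = st i l x"
  using assms(3)[unfolded rel_def]
proof (induction rule: rtranclp_induct)
  case base
  then show ?case using st0[OF assms(1,2)] k1 by (metis less_le_trans zero_less_one)
next
  case (step y z)
  then obtain l where l: "l < k" "y = st i l x" by blast
  obtain l' where l': "l' < k" "z = st i l' y" using step(2) unfolding stJ_def by blast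
  have "z = st i ((l' + l) mod k) x" using stc[OF assms(1) l'(1) l(1) assms(2)] l l' by simp
  moreover have "(l' + l) mod k < k" using k1 by simp
  ultimately show ?case by blast
qed

definition e :: "'c \<Rightarrow> nat" where "e = (SOME e. inj_on e P)"

lemma inj_e: "inj_on e P"
proof -
  obtain f :: "'c \<Rightarrow> nat" and n where "inj_on f P" using finite_imp_inj_to_nat_seg[OF finP] by blast
  thus ?thesis unfolding e_def by (rule someI[of "\<lambda>e. inj_on e P"])
qed

definition vc :: "nat \<Rightarrow> 'c \<Rightarrow> nat" where
  "vc i c = prod_encode (i, Min (e ` res ({..d} - {i}) c))"

definition gY :: "nat \<Rightarrow> nat" where "gY n = fst (prod_decode n)"

lemma gY_vc[simp]: "gY (vc i c) = i" unfolding gY_def vc_def by simp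

lemma vc_eq: assumes "x \<in> P" "rel ({..d} - {i}) x y" shows "vc i x = vc i y"
proof -
  have "res ({..d} - {i}) y = res ({..d} - {i}) x" by (rule res_eq[OF _ assms(1,2)]) blast
  thus ?thesis unfolding vc_def by simp
qed

lemma vc_inj: assumes x: "x \<in> P" and y: "y \<in> P" and eq: "vc i x = vc i' y"
  shows "i = i' \<and> rel ({..d} - {i}) x y"
proof -
  have ii: "i = i'" using arg_cong[OF eq, of gY] by simp
  let ?J = "{..d} - {i}"
  let ?R = "res ?J x" and ?R' = "res ?J y"
  have JD: "?J \<subseteq> {..d}" by blast
  have sR: "?R \<subseteq> P" "?R' \<subseteq> P" using res_sub[OF JD x] res_sub[OF JD y] .
  have fR: "finite ?R" "finite ?R'" using sR finP finite_subset by auto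
  have "x \<in> ?R" "y \<in> ?R'" unfolding res_def by simp_all
  hence ne: "?R \<noteq> {}" "?R' \<noteq> {}" by blast+
  have m: "Min (e ` ?R) = Min (e ` ?R')" using eq ii unfolding vc_def by simp
  have m1: "Min (e ` ?R) \<in> e ` ?R" using fR ne by (intro Min_in) auto
  have m2: "Min (e ` ?R') \<in> e ` ?R'" using fR ne by (intro Min_in) auto
  obtain u where u: "u \<in> ?R" "e u = Min (e ` ?R)" using m1 by force
  obtain u' where u': "u' \<in> ?R'" "e u' = Min (e ` ?R')" using m2 by force
  have "u \<in> P" "u' \<in> P" using u(1) u'(1) sR by blast+
  moreover have "e u = e u'" using u u' m by simp
  ultimately have "u = u'" using inj_e unfolding inj_on_def by blast
  hence r1: "rel ?J x u" and r2: "rel ?J y u" using u u' unfolding res_def by auto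
  have "rel ?J u y" by (rule rel_sym[OF JD r2 y])
  hence "rel ?J x y" using r1 rel_trans by blast
  thus ?thesis using ii by simp
qed

definition cellY :: "nat set \<Rightarrow> 'c \<Rightarrow> nat set" where
  "cellY J c = (\<lambda>i. vc i c) ` ({..d} - J)"

lemma gY_cell: "gY ` cellY J c = {..d} - J"
  unfolding cellY_def by (simp add: image_image)

lemma cellY_J: "J \<subseteq> {..d} \<Longrightarrow> {..d} - gY ` cellY J c = J"
  unfolding gY_cell by auto

lemma cellY_card: "card (cellY J c) = card ({..d} - J)"
  unfolding cellY_def
proof (rule card_image, rule inj_onI)
  fix x y assume "vc x c = vc y c"
  hence "gY (vc x c) = gY (vc y c)" by simp
  thus "x = y" by simp
qed

lemma cellY_fin: "finite (cellY J c)" unfolding cellY_def by simp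

lemma cellY_eq: assumes "J \<subseteq> {..d}" "c \<in> P" "rel J c c'" shows "cellY J c = cellY J c'"
proof -
  have "vc i c = vc i c'" if ii: "i \<in> {..d} - J" for i
  proof -
    have "J \<subseteq> {..d} - {i}" using ii assms(1) by blast
    from vc_eq[OF assms(2) rel_mono[OF this assms(3)]] show ?thesis .
  qed
  thus ?thesis unfolding cellY_def by (intro image_cong) auto
qed

lemma cellY_sub: assumes "\<sigma> \<subseteq> cellY J c" shows "\<sigma> = cellY ({..d} - gY ` \<sigma>) c"
proof -
  have "gY ` \<sigma> \<subseteq> gY ` cellY J c" using assms by (rule image_mono)
  hence "gY ` \<sigma> \<subseteq> {..d}" unfolding gY_cell by blast
  hence e: "{..d} - ({..d} - gY ` \<sigma>) = gY ` \<sigma>" by auto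
  have n: "n = vc (gY n) c" if nn: "n \<in> \<sigma>" for n
  proof -
    obtain i where "n = vc i c" using nn assms unfolding cellY_def by blast
    thus ?thesis by simp
  qed
  have "(\<lambda>i. vc i c) ` gY ` \<sigma> = \<sigma>"
  proof
    show "(\<lambda>i. vc i c) ` gY ` \<sigma> \<subseteq> \<sigma>"
    proof
      fix m assume "m \<in> (\<lambda>i. vc i c) ` gY ` \<sigma>"
      then obtain n where nn: "n \<in> \<sigma>" "m = vc (gY n) c" by blast
      have "vc (gY n) c = n" using n[OF nn(1)] by simp
      thus "m \<in> \<sigma>" using nn by simp
    qed
    show "\<sigma> \<subseteq> (\<lambda>i. vc i c) ` gY ` \<sigma>"
    proof
      fix n assume "n \<in> \<sigma>"
      thus "n \<in> (\<lambda>i. vc i c) ` gY ` \<sigma>" using n[of n] by blast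
    qed
  qed
  thus ?thesis unfolding cellY_def e by simp
qed

lemma cellY_mono: "J \<subseteq> J' \<Longrightarrow> cellY J' c \<subseteq> cellY J c"
  unfolding cellY_def by auto

definition CY :: "nat set set" where
  "CY = {cellY J c | J c. J \<subseteq> {..d} \<and> c \<in> P}"

definition JT :: "nat set \<Rightarrow> nat set" where "JT \<tau> = {..d} - gY ` \<tau>"

definition S :: "nat set \<Rightarrow> 'c set set" where
  "S \<tau> = {res (JT \<tau>) c | c. c \<in> P \<and> cellY (JT \<tau>) c = \<tau>}"

lemma S_fin: "finite (S \<tau>)"
proof -
  have "JT \<tau> \<subseteq> {..d}" unfolding JT_def by blast
  hence "res (JT \<tau>) c \<subseteq> P" if "c \<in> P" for c using res_sub that by blast
  hence "S \<tau> \<subseteq> Pow P" unfolding S_def by blast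
  thus ?thesis using finP finite_subset by blast
qed

definition h :: "nat set \<Rightarrow> nat \<Rightarrow> 'c set" where
  "h \<tau> = (SOME h. bij_betw h {1..card (S \<tau>)} (S \<tau>))"

lemma h_bij: "bij_betw (h \<tau>) {1..card (S \<tau>)} (S \<tau>)"
  unfolding h_def using ex_bij_betw_nat_finite_1[OF S_fin] by (rule someI_ex)

definition idx :: "nat set \<Rightarrow> 'c \<Rightarrow> nat" where
  "idx J c = inv_into {1..card (S (cellY J c))} (h (cellY J c)) (res J c)"

definition mcY :: "nat set \<Rightarrow> 'c \<Rightarrow> mcell" where
  "mcY J c = (cellY J c, idx J c)"

definition rep :: "mcell \<Rightarrow> 'c" where
  "rep a = (SOME c. c \<in> h (fst a) (snd a))"

definition glY :: "mcell \<Rightarrow> nat set \<Rightarrow> nat" where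
  "glY a \<sigma> = idx ({..d} - gY ` \<sigma>) (rep a)"

definition Y :: mcomplex where
  "Y = \<lparr>cells = CY, mult = (\<lambda>\<tau>. card (S \<tau>)), glue = glY\<rparr>"

lemma Y_simps[simp]: "cells Y = CY" "mult Y = (\<lambda>\<tau>. card (S \<tau>))" "glue Y = glY"
  unfolding Y_def by simp_all

lemma fst_mcY[simp]: "fst (mcY J c) = cellY J c" unfolding mcY_def by simp

lemma res_in_S: assumes "J \<subseteq> {..d}" "c \<in> P" shows "res J c \<in> S (cellY J c)"
  unfolding S_def JT_def cellY_J[OF assms(1)] using assms(2) by blast

lemma mcY_in: assumes J: "J \<subseteq> {..d}" and c: "c \<in> P"
  shows "mcY J c \<in> multicells Y" "h (cellY J c) (idx J c) = res J c"
proof -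
  let ?\<tau> = "cellY J c"
  have r: "res J c \<in> h ?\<tau> ` {1..card (S ?\<tau>)}" using res_in_S[OF assms] h_bij unfolding bij_betw_def by auto
  have "idx J c \<in> {1..card (S ?\<tau>)}" unfolding idx_def by (rule inv_into_into[OF r])
  moreover have "?\<tau> \<in> CY" unfolding CY_def using assms by blast
  ultimately show "mcY J c \<in> multicells Y" unfolding multicells_def mcY_def by simp
  show "h ?\<tau> (idx J c) = res J c" unfolding idx_def by (rule f_inv_into_f[OF r])
qed

lemma mc_char: assumes "a \<in> multicells Y" shows "\<exists>J c. J \<subseteq> {..d} \<and> c \<in> P \<and> a = mcY J c"
proof -
  obtain \<tau> r where a: "a = (\<tau>, r)" "\<tau> \<in> CY" "r \<in> {1..card (S \<tau>)}"
    using assms unfolding multicells_def by auto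
  obtain J0 x where tx: "\<tau> = cellY J0 x" "J0 \<subseteq> {..d}" using a(2) unfolding CY_def by blast
  have "h \<tau> r \<in> S \<tau>" using h_bij a(3) unfolding bij_betw_def by blast
  then obtain c where c: "h \<tau> r = res (JT \<tau>) c" "c \<in> P" "cellY (JT \<tau>) c = \<tau>" unfolding S_def by blast
  have JT: "JT \<tau> = J0" unfolding JT_def tx(1) cellY_J[OF tx(2)] ..
  have "inv_into {1..card (S \<tau>)} (h \<tau>) (h \<tau> r) = r"
    by (rule inv_into_f_f) (use h_bij a(3) in \<open>auto simp: bij_betw_def\<close>)
  hence "idx J0 c = r" unfolding idx_def using c JT by simp
  hence "a = mcY J0 c" unfolding mcY_def using a c JT by simp
  thus ?thesis using tx c by blast
qed

lemma rep_mc: assumes "J \<subseteq> {..d}" "c \<in> P" shows "rel J c (rep (mcY J c)) \<and> rep (mcY J c) \<in> P"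
proof -
  have "c \<in> h (fst (mcY J c)) (snd (mcY J c))" using mcY_in(2)[OF assms] unfolding mcY_def res_def by simp
  hence "rep (mcY J c) \<in> h (fst (mcY J c)) (snd (mcY J c))" unfolding rep_def by (rule someI)
  hence "rel J c (rep (mcY J c))" using mcY_in(2)[OF assms] unfolding mcY_def res_def by simp
  thus ?thesis using rel_P assms by blast
qed

lemma mcY_eq: assumes "J \<subseteq> {..d}" "c \<in> P" "rel J c c'" shows "mcY J c = mcY J c'"
  unfolding mcY_def idx_def using cellY_eq[OF assms] res_eq[OF assms] by simp

lemma mcY_inj: assumes "J \<subseteq> {..d}" "J' \<subseteq> {..d}" "c \<in> P" "c' \<in> P" "mcY J c = mcY J' c'"
  shows "J = J' \<and> rel J c c'"
proof -
  have "cellY J c = cellY J' c'" using assms(5) unfolding mcY_def by simp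
  hence JJ: "J = J'" using cellY_J assms(1,2) by metis
  have "h (cellY J c) (idx J c) = h (cellY J' c') (idx J' c')" using assms(5) unfolding mcY_def by simp
  hence "res J c = res J c'" using mcY_in(2) assms JJ by metis
  hence "c' \<in> res J c" unfolding res_def by auto
  thus ?thesis using JJ unfolding res_def by simp
qed

lemma glue_mcY: assumes J: "J \<subseteq> {..d}" and c: "c \<in> P" and s: "\<sigma> \<subseteq> cellY J c"
  shows "(\<sigma>, glY (mcY J c) \<sigma>) = mcY ({..d} - gY ` \<sigma>) c"
proof -
  let ?J' = "{..d} - gY ` \<sigma>"
  have sc: "\<sigma> = cellY ?J' c" by (rule cellY_sub[OF s])
  have JJ: "J \<subseteq> ?J'" using s gY_cell[of J c] J by auto
  have r: "rel J c (rep (mcY J c))" using rep_mc[OF J c] by blast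
  have "mcY ?J' c = mcY ?J' (rep (mcY J c))" by (rule mcY_eq) (use c rel_mono[OF JJ r] in auto)
  thus ?thesis unfolding glY_def mcY_def using sc by simp
qed

lemma face1_cellY: assumes J: "J \<subseteq> {..d}" and f: "face1 \<sigma> (cellY J c)"
  shows "\<exists>i. i \<in> {..d} - J \<and> \<sigma> = cellY (insert i J) c"
proof -
  let ?J' = "{..d} - gY ` \<sigma>"
  have s: "\<sigma> \<subseteq> cellY J c" using f unfolding face1_def by simp
  have sc: "\<sigma> = cellY ?J' c" by (rule cellY_sub[OF s])
  have "gY ` \<sigma> \<subseteq> gY ` cellY J c" using s by (rule image_mono)
  hence JJ: "J \<subseteq> ?J'" "?J' \<subseteq> {..d}" using J unfolding gY_cell by blast+
  have "card \<sigma> + 1 = card (cellY J c)" using f unfolding face1_def by simp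
  hence cc: "card ({..d} - ?J') + 1 = card ({..d} - J)" using sc cellY_card by metis
  have sub: "{..d} - ?J' \<subseteq> {..d} - J" using JJ by blast
  have "card (({..d} - J) - ({..d} - ?J')) = card ({..d} - J) - card ({..d} - ?J')"
    by (rule card_Diff_subset) (use sub in auto)
  moreover have "({..d} - J) - ({..d} - ?J') = ?J' - J" using JJ by blast
  ultimately have "card (?J' - J) = 1" using cc by simp
  then obtain i where i: "?J' - J = {i}" using card_1_singletonE by blast
  hence "?J' = insert i J" using JJ by blast
  moreover have "i \<in> {..d} - J" using i JJ by blast
  ultimately show ?thesis using sc by metis
qed

end



context gset begin

abbreviation "D \<equiv> {..d}"

lemma gstep_Y: assumes J: "J \<subseteq> D" and c: "c \<in> P" and g: "gstep Y b (mcY J c)"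
  shows "\<exists>J'. J \<subseteq> J' \<and> J' \<subseteq> D \<and> b = mcY J' c"
proof -
  obtain \<sigma> where f: "face1 \<sigma> (cellY J c)" and b: "b = (\<sigma>, glY (mcY J c) \<sigma>)"
    using g unfolding gstep_def by auto
  obtain i where i: "i \<in> D - J" "\<sigma> = cellY (insert i J) c" using face1_cellY[OF J f] by blast
  have s: "\<sigma> \<subseteq> cellY J c" using f unfolding face1_def by simp
  have ij: "insert i J \<subseteq> D" using i J by blast
  have "b = mcY (D - gY ` \<sigma>) c" using glue_mcY[OF J c s] b by simp
  also have "D - gY ` \<sigma> = insert i J" using i(2) cellY_J[OF ij] by simp
  finally show ?thesis using ij by blast
qed

lemma gstep_Y_intro: assumes J: "J \<subseteq> D" and c: "c \<in> P" and i: "i \<in> D - J"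
  shows "gstep Y (mcY (insert i J) c) (mcY J c)"
proof -
  let ?\<sigma> = "cellY (insert i J) c"
  have ij: "insert i J \<subseteq> D" using i J by blast
  have s: "?\<sigma> \<subseteq> cellY J c" by (rule cellY_mono) blast
  have e1: "D - J = insert i (D - insert i J)" using i by blast
  have e3: "card (insert i (D - insert i J)) = Suc (card (D - insert i J))"
    by (rule card_insert_disjoint) auto
  have "card (D - J) = card (insert i (D - insert i J))" using e1 by (rule arg_cong)
  hence hc: "card (D - insert i J) + 1 = card (D - J)" using e3 by linarith
  have f: "face1 ?\<sigma> (cellY J c)" unfolding face1_def
    by (intro conjI cellY_fin s) (unfold cellY_card, rule hc)
  have "(?\<sigma>, glY (mcY J c) ?\<sigma>) = mcY (D - gY ` ?\<sigma>) c" by (rule glue_mcY[OF J c s])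
  also have "D - gY ` ?\<sigma> = insert i J" using cellY_J[OF ij] .
  finally have e2: "mcY (insert i J) c = (?\<sigma>, glY (mcY J c) ?\<sigma>)" by simp
  have mem: "mcY J c \<in> multicells Y" using mcY_in[OF J c] by blast
  show ?thesis unfolding gstep_def fst_mcY Y_simps(3) using mem f e2 by blast
qed

lemma contained_Y: assumes J: "J \<subseteq> D" and c: "c \<in> P"
  shows "contained Y b (mcY J c) \<longleftrightarrow> (\<exists>J'. J \<subseteq> J' \<and> J' \<subseteq> D \<and> b = mcY J' c)"
proof
  assume "contained Y b (mcY J c)"
  hence "(gstep Y)\<^sup>*\<^sup>* b (mcY J c)" unfolding contained_def .
  thus "\<exists>J'. J \<subseteq> J' \<and> J' \<subseteq> D \<and> b = mcY J' c"
  proof (induction rule: converse_rtranclp_induct)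
    case base
    then show ?case using J by blast
  next
    case (step y z)
    then obtain J' where J': "J \<subseteq> J'" "J' \<subseteq> D" "z = mcY J' c" by blast
    from gstep_Y[OF J'(2) c] step(1) J' obtain J'' where j2: "J' \<subseteq> J''" "J'' \<subseteq> D" "y = mcY J'' c" by blast
    have "J \<subseteq> J''" using J'(1) j2(1) by (rule order_trans)
    thus ?case using j2 by blast
  qed
next
  assume "\<exists>J'. J \<subseteq> J' \<and> J' \<subseteq> D \<and> b = mcY J' c"
  then obtain J' where J': "J \<subseteq> J'" "J' \<subseteq> D" "b = mcY J' c" by blast
  have "\<forall>J. J \<subseteq> J' \<longrightarrow> card (J' - J) = n \<longrightarrow> contained Y (mcY J' c) (mcY J c)" for n
  proof (induction n)
    case 0
    show ?case
    proof (intro allI impI)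
      fix J assume h: "J \<subseteq> J'" "card (J' - J) = 0"
      have "finite (J' - J)" using J'(2) finite_subset by blast
      hence "J' = J" using h by auto
      thus "contained Y (mcY J' c) (mcY J c)" unfolding contained_def by simp
    qed
  next
    case (Suc n)
    show ?case
    proof (intro allI impI)
      fix J assume h: "J \<subseteq> J'" "card (J' - J) = Suc n"
      have fin: "finite (J' - J)" using J'(2) finite_subset by blast
      have "J' - J \<noteq> {}" using h(2) by (intro notI) simp
      then obtain i where i: "i \<in> J' - J" by blast
      have JD: "J \<subseteq> D" using h(1) J'(2) by blast
      have g: "gstep Y (mcY (insert i J) c) (mcY J c)" by (rule gstep_Y_intro[OF JD c]) (use i J'(2) in blast)
      have ee: "J' - J = insert i (J' - insert i J)" using i by blast
      have "card (insert i (J' - insert i J)) = Suc (card (J' - insert i J))"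
        by (rule card_insert_disjoint) (use fin in auto)
      hence "card (J' - insert i J) = n" using h(2) unfolding ee[symmetric] by simp
      moreover have "insert i J \<subseteq> J'" using i h by blast
      ultimately have "contained Y (mcY J' c) (mcY (insert i J) c)" using Suc.IH[rule_format] by blast
      thus "contained Y (mcY J' c) (mcY J c)" using g unfolding contained_def by simp
    qed
  qed
  thus "contained Y b (mcY J c)" using J' by blast
qed

lemma mcells_card_Y: assumes "J \<subseteq> D" "c \<in> P"
  shows "mcY J c \<in> mcells_card Y n \<longleftrightarrow> card (D - J) = n"
  unfolding mcells_card_def using mcY_in[OF assms] cellY_card by simp

lemma mcY_card_full: assumes "J \<subseteq> D" "card (D - J) = d + 1" shows "J = {}"
proof -
  have "D - J = D" by (rule card_subset_eq) (use assms in auto)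
  thus ?thesis using assms(1) by blast
qed

lemma res_full: assumes c: "c \<in> P" shows "res D c = P"
proof
  show "res D c \<subseteq> P" using res_sub[OF _ c] by blast
  show "P \<subseteq> res D c" unfolding res_def using allP[OF c] by blast
qed

lemma Y_multicomplex: "multicomplex d Y"
proof -
  have sc: "simplicial_complex d CY"
    unfolding simplicial_complex_def
  proof (intro conjI ballI allI impI)
    have "cellY D c0 = {}" unfolding cellY_def by simp
    thus "{} \<in> CY" unfolding CY_def using c0P by blast
    fix \<tau> assume t: "\<tau> \<in> CY"
    then obtain J x where Jx: "J \<subseteq> D" "x \<in> P" "\<tau> = cellY J x" unfolding CY_def by blast
    show "finite \<tau>" using Jx cellY_fin by simp
    have "card (D - J) \<le> card D" by (rule card_mono) auto
    thus "card \<tau> \<le> d + 1" using Jx(3) cellY_card by simp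
    fix \<sigma> assume "\<sigma> \<subseteq> \<tau>"
    hence "\<sigma> = cellY (D - gY ` \<sigma>) x" using cellY_sub Jx by blast
    thus "\<sigma> \<in> CY" unfolding CY_def using Jx by blast
  next
    have "card (cellY {} c0) = d + 1" using cellY_card by simp
    moreover have "cellY {} c0 \<in> CY" unfolding CY_def using c0P by blast
    ultimately show "\<exists>\<tau>\<in>CY. card \<tau> = d + 1" by blast
  qed
  have m0: "card (S {}) = 1"
  proof -
    have JT: "JT {} = D" unfolding JT_def by simp
    have "S {} = {P}"
    proof
      show "S {} \<subseteq> {P}"
      proof
        fix R assume "R \<in> S {}"
        then obtain c where "R = res (JT {}) c" "c \<in> P" unfolding S_def by blast
        thus "R \<in> {P}" using res_full JT by simp
      qed
      have "cellY D c0 = {}" unfolding cellY_def by simp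
      hence "\<exists>c. res D c0 = res D c \<and> c \<in> P \<and> cellY D c = {}" using c0P by blast
      hence "res D c0 \<in> S {}" unfolding S_def JT by simp
      thus "{P} \<subseteq> S {}" using res_full[OF c0P] by simp
    qed
    thus ?thesis by simp
  qed
  have mv: "card (S {v}) = 1" if v: "{v} \<in> CY" for v
  proof -
    obtain J x where Jx: "J \<subseteq> D" "x \<in> P" "{v} = cellY J x" using v unfolding CY_def by blast
    have JT: "JT {v} = J" unfolding JT_def Jx(3) using cellY_J[OF Jx(1)] .
    have "card (D - J) = card {v}" using cellY_card[of J x] Jx(3) by simp
    hence "card (D - J) = 1" by simp
    then obtain i where i: "D - J = {i}" using card_1_singletonE by blast
    have Ji: "J = D - {i}" using i Jx(1) by blast
    have "S {v} = {res J x}"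
    proof
      show "{res J x} \<subseteq> S {v}" unfolding S_def JT using Jx by blast
      show "S {v} \<subseteq> {res J x}"
      proof
        fix R assume "R \<in> S {v}"
        then obtain y where y: "R = res J y" "y \<in> P" "cellY J y = {v}" unfolding S_def JT by blast
        have "vc i y = vc i x" using y(3) Jx(3) i unfolding cellY_def by auto
        hence "rel (D - {i}) x y" using vc_inj[OF Jx(2) y(2), of i i] by simp
        hence "rel J x y" using Ji by simp
        hence "R = res J x" using res_eq[OF Jx(1,2)] y by blast
        thus "R \<in> {res J x}" by simp
      qed
    qed
    thus ?thesis by simp
  qed
  have m1: "1 \<le> card (S \<tau>)" if t: "\<tau> \<in> CY" for \<tau>
  proof -
    obtain J x where Jx: "J \<subseteq> D" "x \<in> P" "\<tau> = cellY J x" using t unfolding CY_def by blast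
    have "res J x \<in> S \<tau>" using res_in_S[OF Jx(1,2)] Jx(3) by simp
    hence "S \<tau> \<noteq> {}" by blast
    hence "card (S \<tau>) > 0" using S_fin by (simp add: card_gt_0_iff)
    thus ?thesis by linarith
  qed
  have gr: "1 \<le> glY a \<sigma> \<and> glY a \<sigma> \<le> card (S \<sigma>)" if a: "a \<in> multicells Y" and f: "face1 \<sigma> (fst a)" for a \<sigma>
  proof -
    obtain J x where Jx: "J \<subseteq> D" "x \<in> P" "a = mcY J x" using mc_char[OF a] by blast
    have s: "\<sigma> \<subseteq> cellY J x" using f Jx unfolding face1_def by simp
    have "(\<sigma>, glY a \<sigma>) = mcY (D - gY ` \<sigma>) x" using glue_mcY[OF Jx(1,2) s] Jx by simp
    moreover have "mcY (D - gY ` \<sigma>) x \<in> multicells Y" by (rule mcY_in) (use Jx in auto)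
    ultimately have "(\<sigma>, glY a \<sigma>) \<in> multicells Y" by simp
    thus ?thesis unfolding multicells_def by simp
  qed
  have cons: "glY s1 (fst s1 \<inter> fst s2) = glY s2 (fst s1 \<inter> fst s2)"
    if h: "c \<in> multicells Y" "contained Y s1 c" "contained Y s2 c" for s1 s2 c
  proof -
    obtain J x where Jx: "J \<subseteq> D" "x \<in> P" "c = mcY J x" using mc_char[OF h(1)] by blast
    obtain J1 where J1: "J \<subseteq> J1" "J1 \<subseteq> D" "s1 = mcY J1 x" using contained_Y[OF Jx(1,2)] h(2) Jx(3) by blast
    obtain J2 where J2: "J \<subseteq> J2" "J2 \<subseteq> D" "s2 = mcY J2 x" using contained_Y[OF Jx(1,2)] h(3) Jx(3) by blast
    let ?\<rho> = "fst s1 \<inter> fst s2"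
    have "(?\<rho>, glY s1 ?\<rho>) = mcY (D - gY ` ?\<rho>) x" using glue_mcY[OF J1(2) Jx(2)] J1(3) by simp
    moreover have "(?\<rho>, glY s2 ?\<rho>) = mcY (D - gY ` ?\<rho>) x" using glue_mcY[OF J2(2) Jx(2)] J2(3) by simp
    ultimately have "(?\<rho>, glY s1 ?\<rho>) = (?\<rho>, glY s2 ?\<rho>)" by (rule trans[OF _ sym])
    thus ?thesis by simp
  qed
  show ?thesis unfolding multicomplex_def Y_simps
  proof (intro conjI ballI allI impI)
    show "simplicial_complex d CY" by (rule sc)
    show "card (S {}) = 1" by (rule m0)
  next
    fix v assume "{v} \<in> CY" thus "card (S {v}) = 1" by (rule mv)
  next
    fix \<tau> assume "\<tau> \<in> CY" thus "1 \<le> card (S \<tau>)" by (rule m1)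
  next
    fix a \<sigma> assume "a \<in> multicells Y" "face1 \<sigma> (fst a)"
    from gr[OF this] show "1 \<le> glY a \<sigma>" "glY a \<sigma> \<le> card (S \<sigma>)" by auto
  next
    fix s1 s2 c assume "s1 \<in> multicells Y" "s2 \<in> multicells Y" "c \<in> multicells Y"
      "card (fst s1) = card (fst s2) \<and> contained Y s1 c \<and> contained Y s2 c \<and>
         face1 (fst s1 \<inter> fst s2) (fst s1) \<and> face1 (fst s1 \<inter> fst s2) (fst s2)"
    thus "glY s1 (fst s1 \<inter> fst s2) = glY s2 (fst s1 \<inter> fst s2)" using cons by blast
  qed
qed

end



context gset begin

lemma mcY_mc_iff: assumes "a \<in> multicells Y" shows "\<exists>J c. J \<subseteq> D \<and> c \<in> P \<and> a = mcY J c"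
  using mc_char[OF assms] .

lemma cham: assumes "a \<in> mcells_card Y (d+1)" shows "\<exists>x\<in>P. a = mcY {} x"
proof -
  have am: "a \<in> multicells Y" using assms unfolding mcells_card_def by simp
  obtain J x where Jx: "J \<subseteq> D" "x \<in> P" "a = mcY J x" using mc_char[OF am] by blast
  have "card (D - J) = d + 1" using mcells_card_Y[OF Jx(1,2)] assms Jx(3) by simp
  hence "J = {}" using mcY_card_full Jx(1) by blast
  thus ?thesis using Jx by blast
qed

lemma cham_in: "x \<in> P \<Longrightarrow> mcY {} x \<in> mcells_card Y (d+1)"
  using mcells_card_Y[of "{}" x] by simp

lemma pan_Y: assumes "b \<in> mcells_card Y d" shows "\<exists>i\<in>D. \<exists>x\<in>P. b = mcY {i} x"
proof -
  have am: "b \<in> multicells Y" using assms unfolding mcells_card_def by simp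
  obtain J x where Jx: "J \<subseteq> D" "x \<in> P" "b = mcY J x" using mc_char[OF am] by blast
  have c: "card (D - J) = d" using mcells_card_Y[OF Jx(1,2)] assms Jx(3) by simp
  have "card (D - J) = card D - card J" by (rule card_Diff_subset) (use Jx(1) finite_subset in auto)
  hence "card J = 1" using c card_mono[OF _ Jx(1)] by simp
  then obtain i where "J = {i}" using card_1_singletonE by blast
  thus ?thesis using Jx by blast
qed

lemma pan_in: assumes "i \<in> D" "x \<in> P" shows "mcY {i} x \<in> mcells_card Y d"
proof -
  have "card (D - {i}) = d" using assms by simp
  thus ?thesis using mcells_card_Y[of "{i}" x d] assms by simp
qed

lemma rep_cham: assumes "x \<in> P" shows "rep (mcY {} x) = x"
proof -
  have "rel {} x (rep (mcY {} x))" using rep_mc[of "{}" x] assms by simp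
  thus ?thesis using rel_empty by metis
qed

lemma Y_pure: "pure d Y"
  unfolding pure_def
proof
  fix a assume "a \<in> multicells Y"
  then obtain J x where Jx: "J \<subseteq> D" "x \<in> P" "a = mcY J x" using mc_char by blast
  have "contained Y a (mcY {} x)" using contained_Y[of "{}" x a] Jx by blast
  thus "\<exists>c\<in>mcells_card Y (d + 1). contained Y a c" using cham_in[OF Jx(2)] by blast
qed

lemma Y_coloring: "coloring d Y gY"
  unfolding coloring_def Y_simps
proof (intro conjI allI impI ballI)
  fix v assume "{v} \<in> CY"
  then obtain J x where Jx: "J \<subseteq> D" "x \<in> P" "{v} = cellY J x" unfolding CY_def by blast
  have "gY v \<in> gY ` cellY J x" using Jx(3) by blast
  thus "gY v \<le> d" unfolding gY_cell by simp
next
  fix \<tau> assume "\<tau> \<in> CY"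
  then obtain J x where Jx: "J \<subseteq> D" "x \<in> P" "\<tau> = cellY J x" unfolding CY_def by blast
  show "inj_on gY \<tau>"
  proof (rule inj_onI)
    fix u v assume "u \<in> \<tau>" "v \<in> \<tau>" "gY u = gY v"
    then obtain i j where "u = vc i x" "v = vc j x" "gY u = gY v" using Jx(3) unfolding cellY_def by blast
    thus "u = v" by simp
  qed
qed

lemma Y_lpc: "lower_path_connected d Y"
  unfolding lower_path_connected_def
proof (intro ballI)
  fix a a' assume a: "a \<in> mcells_card Y (d + 1)" and a': "a' \<in> mcells_card Y (d + 1)"
  obtain x where x: "x \<in> P" "a = mcY {} x" using cham[OF a] by blast
  obtain y where y: "y \<in> P" "a' = mcY {} y" using cham[OF a'] by blast
  have "rel D x y" using allP x y by blast
  hence "(stJ D)\<^sup>*\<^sup>* x y" unfolding rel_def .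
  hence "(neighbors d Y)\<^sup>*\<^sup>* (mcY {} x) (mcY {} y)"
  proof (induction rule: rtranclp_induct)
    case base then show ?case by simp
  next
    case (step z w)
    have zP: "z \<in> P" using rel_P[of D x z] x step(1) unfolding rel_def by blast
    obtain i l where il: "i \<in> D" "l < k" "w = st i l z" using step(2) unfolding stJ_def by blast
    have wP: "w \<in> P" using stP il zP by blast
    have r: "rel {i} z w" using st_rel[of i "{i}" l z] il by simp
    have eq: "mcY {i} z = mcY {i} w" by (rule mcY_eq) (use il zP r in auto)
    have "contained Y (mcY {i} z) (mcY {} z)" using contained_Y[of "{}" z] il zP by blast
    moreover have "contained Y (mcY {i} z) (mcY {} w)" using contained_Y[of "{}" w] il wP eq by blast
    ultimately have "neighbors d Y (mcY {} z) (mcY {} w)"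
      unfolding neighbors_def using cham_in zP wP pan_in[OF il(1) zP] by blast
    thus ?case using step(3) by simp
  qed
  thus "(neighbors d Y)\<^sup>*\<^sup>* a a'" using x y by simp
qed

lemma res_single: assumes "i \<in> D" "x \<in> P" shows "res {i} x = (\<lambda>l. st i l x) ` {..<k}"
proof
  show "res {i} x \<subseteq> (\<lambda>l. st i l x) ` {..<k}"
  proof
    fix y assume "y \<in> res {i} x"
    hence "rel {i} x y" unfolding res_def by simp
    then obtain l where "l < k" "y = st i l x" using rel_single assms by blast
    thus "y \<in> (\<lambda>l. st i l x) ` {..<k}" by blast
  qed
  show "(\<lambda>l. st i l x) ` {..<k} \<subseteq> res {i} x" unfolding res_def using st_rel[of i "{i}"] by auto
qed

lemma delta_Y: assumes i: "i \<in> D" and x: "x \<in> P"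
  shows "delta d Y (mcY {i} x) = (\<lambda>y. mcY {} y) ` res {i} x"
proof
  show "delta d Y (mcY {i} x) \<subseteq> (\<lambda>y. mcY {} y) ` res {i} x"
  proof
    fix a assume "a \<in> delta d Y (mcY {i} x)"
    hence a: "a \<in> mcells_card Y (d+1)" "contained Y (mcY {i} x) a" unfolding delta_def by auto
    obtain y where y: "y \<in> P" "a = mcY {} y" using cham[OF a(1)] by blast
    obtain J' where J': "J' \<subseteq> D" "mcY {i} x = mcY J' y" using contained_Y[of "{}" y] a(2) y by blast
    have "{i} = J' \<and> rel {i} x y" by (rule mcY_inj) (use i x y J' in auto)
    hence "y \<in> res {i} x" unfolding res_def by blast
    thus "a \<in> (\<lambda>y. mcY {} y) ` res {i} x" using y by blast
  qed
  show "(\<lambda>y. mcY {} y) ` res {i} x \<subseteq> delta d Y (mcY {i} x)"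
  proof
    fix a assume "a \<in> (\<lambda>y. mcY {} y) ` res {i} x"
    then obtain y where y: "rel {i} x y" "a = mcY {} y" unfolding res_def by blast
    have yP: "y \<in> P" using rel_P[of "{i}" x y] i x y by blast
    have eq: "mcY {i} x = mcY {i} y" by (rule mcY_eq) (use i x y in auto)
    have "contained Y (mcY {i} x) (mcY {} y)" using contained_Y[of "{}" y] eq i yP by blast
    thus "a \<in> delta d Y (mcY {i} x)" unfolding delta_def using cham_in[OF yP] y by blast
  qed
qed

lemma Y_degree: "degree_bounded d k Y"
  unfolding degree_bounded_def
proof
  fix b assume "b \<in> mcells_card Y d"
  then obtain i x where ix: "i \<in> D" "x \<in> P" "b = mcY {i} x" using pan_Y by blast
  have "delta d Y b = (\<lambda>y. mcY {} y) ` (\<lambda>l. st i l x) ` {..<k}" using delta_Y[OF ix(1,2)] res_single[OF ix(1,2)] ix(3) by simp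
  moreover have "card ((\<lambda>y. mcY {} y) ` (\<lambda>l. st i l x) ` {..<k}) \<le> k"
    by (metis card_image_le card_lessThan finite_imageI finite_lessThan le_trans)
  ultimately show "finite (delta d Y b) \<and> card (delta d Y b) \<le> k" by simp
qed

definition \<omega>Y :: "mcell \<Rightarrow> nat \<Rightarrow> mcell \<Rightarrow> mcell" where
  "\<omega>Y b l a = mcY {} (st (Min (D - gY ` fst b)) l (rep a))"

lemma \<omega>Y_eq: assumes "i \<in> D" "x \<in> P" "y \<in> P"
  shows "\<omega>Y (mcY {i} x) l (mcY {} y) = mcY {} (st i l y)"
proof -
  have "D - gY ` fst (mcY {i} x) = {i}" using cellY_J[of "{i}" x] assms(1) by simp
  thus ?thesis unfolding \<omega>Y_def using rep_cham[OF assms(3)] by simp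
qed

lemma mod_inv: "l < k \<Longrightarrow> (k - (k - l) mod k) mod k = l"
proof (cases "l = 0")
  case True then show ?thesis by simp
next
  case False
  assume "l < k"
  hence "(k - l) mod k = k - l" using False by simp
  thus ?thesis using \<open>l < k\<close> by simp
qed

lemma Y_kord: "k_ordering d k Y \<omega>Y"
  unfolding k_ordering_def
proof (intro ballI conjI allI impI)
  fix b assume "b \<in> mcells_card Y d"
  then obtain i x where ix: "i \<in> D" "x \<in> P" "b = mcY {i} x" using pan_Y by blast
  have del: "delta d Y b = (\<lambda>y. mcY {} y) ` res {i} x" using delta_Y[OF ix(1,2)] ix(3) by simp
  have resP: "res {i} x \<subseteq> P" using res_sub[of "{i}" x] ix by blast
  have il: "i \<le> d" using ix by simp
  have clos: "st i l y \<in> res {i} x" if "y \<in> res {i} x" "l < k" for y l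
    using that st_rel[of i "{i}" l y] rel_trans unfolding res_def by blast
  have act: "\<omega>Y b l (mcY {} y) = mcY {} (st i l y)" if "y \<in> res {i} x" for y l
    using \<omega>Y_eq[OF ix(1,2)] resP that ix(3) by blast
  {
    fix l assume l: "l < k"
    let ?l' = "(k - l) mod k"
    have l': "?l' < k" using l by simp
    show "bij_betw (\<omega>Y b l) (delta d Y b) (delta d Y b)"
    proof (rule bij_betw_byWitness[where f' = "\<omega>Y b ?l'"])
      show "\<forall>a\<in>delta d Y b. \<omega>Y b ?l' (\<omega>Y b l a) = a"
      proof
        fix a assume "a \<in> delta d Y b"
        then obtain y where y: "y \<in> res {i} x" "a = mcY {} y" using del by blast
        have "\<omega>Y b ?l' (\<omega>Y b l a) = mcY {} (st i ?l' (st i l y))"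
          using act y clos l by simp
        also have "st i ?l' (st i l y) = y" using st_inv il l resP y by blast
        finally show "\<omega>Y b ?l' (\<omega>Y b l a) = a" using y by simp
      qed
      show "\<forall>a\<in>delta d Y b. \<omega>Y b l (\<omega>Y b ?l' a) = a"
      proof
        fix a assume "a \<in> delta d Y b"
        then obtain y where y: "y \<in> res {i} x" "a = mcY {} y" using del by blast
        have "\<omega>Y b l (\<omega>Y b ?l' a) = mcY {} (st i l (st i ?l' y))"
          using act y clos l' by simp
        also have "st i ((k - ?l') mod k) (st i ?l' y) = y" using st_inv il l' resP y by blast
        hence "st i l (st i ?l' y) = y" using mod_inv[OF l] by simp
        finally show "\<omega>Y b l (\<omega>Y b ?l' a) = a" using y by simp
      qed
      show "\<omega>Y b l ` delta d Y b \<subseteq> delta d Y b" using del act clos l by auto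
      show "\<omega>Y b ?l' ` delta d Y b \<subseteq> delta d Y b" using del act clos l' by auto
    qed
  }
  {
    fix a assume "a \<in> delta d Y b"
    then obtain y where y: "y \<in> res {i} x" "a = mcY {} y" using del by blast
    show "\<omega>Y b 0 a = a" using act[OF y(1)] st0[OF il] resP y by auto
  }
  {
    fix l l' a assume l: "l < k" and l': "l' < k" and "a \<in> delta d Y b"
    then obtain y where y: "y \<in> res {i} x" "a = mcY {} y" using del by blast
    have "\<omega>Y b ((l + l') mod k) a = mcY {} (st i ((l + l') mod k) y)" using act y by simp
    also have "\<dots> = mcY {} (st i l (st i l' y))" using stc[OF il l l'] resP y by auto
    also have "\<dots> = \<omega>Y b l (\<omega>Y b l' a)" using act y clos l' by simp
    finally show "\<omega>Y b ((l + l') mod k) a = \<omega>Y b l (\<omega>Y b l' a)" .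
  }
  {
    fix a a' assume "a \<in> delta d Y b" "a' \<in> delta d Y b"
    then obtain y y' where y: "y \<in> res {i} x" "a = mcY {} y" and y': "y' \<in> res {i} x" "a' = mcY {} y'"
      using del by blast
    have "rel {i} y x" using rel_sym[of "{i}" x y] ix y unfolding res_def by auto
    hence "rel {i} y y'" using y' rel_trans unfolding res_def by blast
    then obtain l where l: "l < k" "y' = st i l y" using rel_single il resP y by blast
    hence "\<omega>Y b l a = a'" using act y y' by simp
    thus "\<exists>l<k. \<omega>Y b l a = a'" using l by blast
  }
qed

end



context gset begin

lemma card_DJ: assumes "J \<subseteq> D" shows "card (D - J) + card J = d + 1"
proof -
  have "card (D - J) = card D - card J" by (rule card_Diff_subset) (use assms finite_subset in auto)
  moreover have "card J \<le> card D" by (rule card_mono) (use assms in auto)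
  ultimately show ?thesis by simp
qed

lemma lv_char: assumes J: "J \<subseteq> D" and c: "c \<in> P" and b: "b \<in> link_vertices Y (mcY J c)"
  shows "\<exists>j\<in>J. \<exists>y. rel J c y \<and> b = mcY (J - {j}) y"
proof -
  have b1: "b \<in> mcells_card Y (card (cellY J c) + 1)" "contained Y (mcY J c) b"
    using b unfolding link_vertices_def by auto
  have bm: "b \<in> multicells Y" using b1 unfolding mcells_card_def by simp
  obtain J' y where Jy: "J' \<subseteq> D" "y \<in> P" "b = mcY J' y" using mc_char[OF bm] by blast
  obtain J'' where J'': "J' \<subseteq> J''" "J'' \<subseteq> D" "mcY J c = mcY J'' y"
    using contained_Y[OF Jy(1,2)] b1(2) Jy(3) by blast
  have "J = J'' \<and> rel J c y" by (rule mcY_inj) (use J c J'' Jy in auto)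
  hence JJ: "J = J''" "rel J c y" by auto
  have "card (D - J') = card (D - J) + 1" using b1(1) Jy mcells_card_Y[OF Jy(1,2)] cellY_card by simp
  hence "card J = card J' + 1" using card_DJ[OF J] card_DJ[OF Jy(1)] by simp
  moreover have "card (J - J') = card J - card J'"
  proof (rule card_Diff_subset)
    show "finite J'" using Jy(1) finite_subset by blast
    show "J' \<subseteq> J" using J'' JJ by simp
  qed
  ultimately have "card (J - J') = 1" by simp
  then obtain j where j: "J - J' = {j}" using card_1_singletonE by blast
  hence "J' = J - {j}" "j \<in> J" using J'' JJ by blast+
  thus ?thesis using JJ Jy by blast
qed

lemma card_insJ: assumes "J \<subseteq> D" "j \<in> J" shows "card (D - (J - {j})) = card (D - J) + 1"
proof -
  have e: "D - (J - {j}) = insert j (D - J)" using assms by blast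
  have "card (insert j (D - J)) = Suc (card (D - J))" by (rule card_insert_disjoint) (use assms in auto)
  thus ?thesis unfolding e by simp
qed

lemma lv_intro: assumes J: "J \<subseteq> D" and c: "c \<in> P" and j: "j \<in> J" and r: "rel J c y"
  shows "mcY (J - {j}) y \<in> link_vertices Y (mcY J c)"
proof -
  have yP: "y \<in> P" using rel_P J r c by blast
  have JD: "J - {j} \<subseteq> D" using J by blast
  have eq: "mcY J c = mcY J y" by (rule mcY_eq[OF J c r])
  have "mcY (J - {j}) y \<in> mcells_card Y (card (cellY J c) + 1)"
    unfolding mcells_card_Y[OF JD yP] cellY_card by (rule card_insJ[OF J j])
  moreover have "\<exists>J'. J - {j} \<subseteq> J' \<and> J' \<subseteq> D \<and> mcY J c = mcY J' y"
    by (rule exI[of _ J]) (use eq J in auto)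
  hence "contained Y (mcY J c) (mcY (J - {j}) y)" unfolding contained_Y[OF JD yP] .
  ultimately show ?thesis unfolding link_vertices_def by simp
qed

lemma adj_intro: assumes J: "J \<subseteq> D" and c: "c \<in> P" and j: "j \<in> J" "j' \<in> J" "j \<noteq> j'" and r: "rel J c y"
  shows "link_adj Y (mcY J c) (mcY (J - {j}) y) (mcY (J - {j'}) y)"
proof -
  have yP: "y \<in> P" using rel_P J r c by blast
  have JD: "J - {j, j'} \<subseteq> D" using J by blast
  have eq: "mcY J c = mcY J y" by (rule mcY_eq[OF J c r])
  have e: "D - (J - {j, j'}) = insert j (insert j' (D - J))" using j J by auto
  have "card (insert j (insert j' (D - J))) = card (D - J) + 2" using j by simp
  hence "card (D - (J - {j, j'})) = card (cellY J c) + 2" unfolding e cellY_card .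
  hence m: "mcY (J - {j, j'}) y \<in> mcells_card Y (card (fst (mcY J c)) + 2)"
    unfolding mcells_card_Y[OF JD yP] fst_mcY .
  have "\<exists>J'. J - {j, j'} \<subseteq> J' \<and> J' \<subseteq> D \<and> mcY J c = mcY J' y"
    by (rule exI[of _ J]) (use eq J in auto)
  hence c1: "contained Y (mcY J c) (mcY (J - {j, j'}) y)" unfolding contained_Y[OF JD yP] .
  have "\<exists>J'. J - {j, j'} \<subseteq> J' \<and> J' \<subseteq> D \<and> mcY (J - {j}) y = mcY J' y"
    by (rule exI[of _ "J - {j}"]) (use J in auto)
  hence c2: "contained Y (mcY (J - {j}) y) (mcY (J - {j, j'}) y)" unfolding contained_Y[OF JD yP] .
  have "\<exists>J'. J - {j, j'} \<subseteq> J' \<and> J' \<subseteq> D \<and> mcY (J - {j'}) y = mcY J' y"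
    by (rule exI[of _ "J - {j'}"]) (use J in auto)
  hence c3: "contained Y (mcY (J - {j'}) y) (mcY (J - {j, j'}) y)" unfolding contained_Y[OF JD yP] .
  have l1: "mcY (J - {j}) y \<in> link_vertices Y (mcY J c)" by (rule lv_intro[OF J c j(1) r])
  have l2: "mcY (J - {j'}) y \<in> link_vertices Y (mcY J c)" by (rule lv_intro[OF J c j(2) r])
  show ?thesis unfolding link_adj_def
    by (intro conjI l1 l2 bexI[of _ "mcY (J - {j, j'}) y"] c1 c2 c3 m)
qed

lemma adj_star: assumes J: "J \<subseteq> D" and c: "c \<in> P" and j: "j \<in> J" "j' \<in> J" and r: "rel J c y"
  shows "(link_adj Y (mcY J c))\<^sup>*\<^sup>* (mcY (J - {j}) y) (mcY (J - {j'}) y)"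
proof (cases "j = j'")
  case True then show ?thesis by simp
next
  case False then show ?thesis using adj_intro[OF J c j False r] by (rule_tac r_into_rtranclp)
qed

lemma link_aux: assumes J: "J \<subseteq> D" and c: "c \<in> P" and two: "2 \<le> card J" and r: "rel J c y"
  and yz: "rel J y z" and j: "j \<in> J" "j' \<in> J"
  shows "(link_adj Y (mcY J c))\<^sup>*\<^sup>* (mcY (J - {j}) y) (mcY (J - {j'}) z)"
proof -
  have "(stJ J)\<^sup>*\<^sup>* y z" using yz unfolding rel_def .
  thus ?thesis using j(2)
  proof (induction arbitrary: j' rule: rtranclp_induct)
    case base
    then show ?case using adj_star[OF J c j(1) _ r] by blast
  next
    case (step z w)
    obtain m l where ml: "m \<in> J" "l < k" "w = st m l z" using step(2) unfolding stJ_def by blast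
    have "card (J - {m}) = card J - 1" using ml(1) by simp
    hence "J - {m} \<noteq> {}" using two by (intro notI) simp
    then obtain j'' where j'': "j'' \<in> J" "j'' \<noteq> m" by blast
    have rcz: "rel J c z" using r step(1) rel_trans unfolding rel_def by simp
    have zP: "z \<in> P" using rel_P[OF J rcz c] .
    have rzw: "rel (J - {j''}) z w" using st_rel[of m "J - {j''}" l z] ml j'' by simp
    have eq: "mcY (J - {j''}) z = mcY (J - {j''}) w" by (rule mcY_eq) (use J zP rzw in auto)
    have rcw: "rel J c w" using rcz st_rel[of m J l z] ml rel_trans by simp
    have "(link_adj Y (mcY J c))\<^sup>*\<^sup>* (mcY (J - {j}) y) (mcY (J - {j''}) z)" using step(3) j''(1) by blast
    moreover have "(link_adj Y (mcY J c))\<^sup>*\<^sup>* (mcY (J - {j''}) w) (mcY (J - {j'}) w)"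
      using adj_star[OF J c j''(1) step(4) rcw] by simp
    ultimately show ?case using eq by simp
  qed
qed

lemma Y_link: "link_connected d Y"
  unfolding link_connected_def
proof (intro ballI impI)
  fix a b b' assume a: "a \<in> multicells Y" and cd: "card (fst a) + 1 \<le> d"
    and b: "b \<in> link_vertices Y a" and b': "b' \<in> link_vertices Y a"
  obtain J c where Jc: "J \<subseteq> D" "c \<in> P" "a = mcY J c" using mc_char[OF a] by blast
  have "card (D - J) + 1 \<le> d" using cd Jc(3) cellY_card by simp
  hence two: "2 \<le> card J" using card_DJ[OF Jc(1)] by simp
  obtain j y where jy: "j \<in> J" "rel J c y" "b = mcY (J - {j}) y" using lv_char[OF Jc(1,2)] b Jc(3) by blast
  obtain j' z where jz: "j' \<in> J" "rel J c z" "b' = mcY (J - {j'}) z" using lv_char[OF Jc(1,2)] b' Jc(3) by blast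
  have "rel J y c" using rel_sym[OF Jc(1) jy(2) Jc(2)] .
  hence "rel J y z" using jz(2) rel_trans by blast
  from link_aux[OF Jc(1,2) two jy(2) this jy(1) jz(1)]
  show "(link_adj Y a)\<^sup>*\<^sup>* b b'" using jy(3) jz(3) Jc(3) by simp
qed

lemma Y_obj: "obj d k Y gY \<omega>Y (mcY {} c0)"
  unfolding obj_def colorable_def
  using Y_multicomplex Y_pure Y_coloring Y_lpc Y_degree Y_kord cham_in[OF c0P] by blast

lemma Y_finite: "finite (multicells Y)"
proof -
  have "multicells Y \<subseteq> (\<lambda>(J, c). mcY J c) ` (Pow D \<times> P)"
  proof
    fix a assume "a \<in> multicells Y"
    then obtain J c where "J \<subseteq> D" "c \<in> P" "a = mcY J c" using mc_char by blast
    thus "a \<in> (\<lambda>(J, c). mcY J c) ` (Pow D \<times> P)" by force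
  qed
  thus ?thesis using finP finite_subset by blast
qed

end



locale gmap = Gs: gset d k P st c0 + Xo: xobj d k X \<gamma> \<omega> a0
  for d k :: nat and P :: "'c set" and st c0 and X \<gamma> \<omega> a0 +
  fixes p :: "'c \<Rightarrow> mcell"
  assumes pP: "\<And>x. x \<in> P \<Longrightarrow> p x \<in> mcells_card X (d+1)"
    and p0: "p c0 = a0"
    and peq: "\<And>i l x. i \<le> d \<Longrightarrow> l < k \<Longrightarrow> x \<in> P \<Longrightarrow> p (st i l x) = Xo.act i l (p x)"
begin

lemma p_surj: assumes "x \<in> mcells_card X (d+1)" shows "\<exists>c\<in>P. p c = x"
proof -
  have "(neighbors d X)\<^sup>*\<^sup>* a0 x" using Xo.lpc Xo.a0C assms unfolding lower_path_connected_def by blast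
  thus ?thesis
  proof (induction rule: rtranclp_induct)
    case base then show ?case using Gs.c0P p0 by blast
  next
    case (step y z)
    obtain c where c: "c \<in> P" "p c = y" using step(3) by blast
    obtain i l where il: "i \<le> d" "l < k" "z = Xo.act i l y" using Xo.neighbors_act[OF step(2)] by blast
    have "st i l c \<in> P" using Gs.stP il c by blast
    moreover have "p (st i l c) = z" using peq[OF il(1,2) c(1)] c il by simp
    ultimately show ?case by blast
  qed
qed

lemma rel_fc: assumes J: "J \<subseteq> {..d}" and x: "x \<in> P" and r: "Gs.rel J x y" and T: "T \<inter> J = {}"
  shows "Xo.verts (p y) T = Xo.verts (p x) T \<and> Xo.fc (p y) T = Xo.fc (p x) T"
proof -
  have "(Gs.stJ J)\<^sup>*\<^sup>* x y" using r unfolding Gs.rel_def .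
  thus ?thesis
  proof (induction rule: rtranclp_induct)
    case base then show ?case by simp
  next
    case (step y z)
    have yP: "y \<in> P" using Gs.rel_P[OF J _ x] step(1) unfolding Gs.rel_def by blast
    obtain m l where ml: "m \<in> J" "l < k" "z = st m l y" using step(2) unfolding Gs.stJ_def by blast
    have md: "m \<le> d" using ml J by auto
    have mT: "m \<notin> T" using ml T by blast
    have "p z = Xo.act m l (p y)" using peq[OF md ml(2) yP] ml by simp
    thus ?case using Xo.act_verts[OF pP[OF yP] md ml(2) mT] step(3) by simp
  qed
qed

definition \<pi> :: "mcell \<Rightarrow> mcell" where
  "\<pi> a = Xo.fc (p (Gs.rep a)) (Gs.gY ` fst a)"

lemma pi_mcY: assumes J: "J \<subseteq> {..d}" and c: "c \<in> P" shows "\<pi> (Gs.mcY J c) = Xo.fc (p c) ({..d} - J)"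
proof -
  have r: "Gs.rel J c (Gs.rep (Gs.mcY J c))" using Gs.rep_mc[OF J c] by blast
  have "({..d} - J) \<inter> J = {}" by blast
  from rel_fc[OF J c r this] show ?thesis unfolding \<pi>_def Gs.fst_mcY Gs.gY_cell by simp
qed

definition vx :: "mcell \<Rightarrow> nat \<Rightarrow> nat" where
  "vx x i = (THE v. v \<in> Xo.verts x {i})"

lemma vx_single: assumes x: "x \<in> mcells_card X (d+1)" and i: "i \<le> d"
  shows "Xo.verts x {i} = {vx x i}"
proof -
  have "card (Xo.verts x {i}) = 1" using Xo.verts_card[OF x] i by simp
  then obtain v where v: "Xo.verts x {i} = {v}" using card_1_singletonE by blast
  hence "vx x i = v" unfolding vx_def by simp
  thus ?thesis using v by simp
qed

lemma verts_vx: assumes x: "x \<in> mcells_card X (d+1)" and T: "T \<subseteq> {..d}"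
  shows "Xo.verts x T = vx x ` T"
proof
  show "Xo.verts x T \<subseteq> vx x ` T"
  proof
    fix v assume v: "v \<in> Xo.verts x T"
    hence "\<gamma> v \<in> T" unfolding Xo.verts_def by simp
    hence "v \<in> Xo.verts x {\<gamma> v}" using v unfolding Xo.verts_def by simp
    hence "v = vx x (\<gamma> v)" using vx_single[OF x] T \<open>\<gamma> v \<in> T\<close> by blast
    thus "v \<in> vx x ` T" using \<open>\<gamma> v \<in> T\<close> by blast
  qed
  show "vx x ` T \<subseteq> Xo.verts x T"
  proof
    fix v assume "v \<in> vx x ` T"
    then obtain i where i: "i \<in> T" "v = vx x i" by blast
    hence "v \<in> Xo.verts x {i}" using vx_single[OF x] T by auto
    thus "v \<in> Xo.verts x T" using i unfolding Xo.verts_def by simp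
  qed
qed

definition fY :: "nat \<Rightarrow> nat" where
  "fY n = vx (p (SOME c. c \<in> P \<and> Gs.vc (Gs.gY n) c = n)) (Gs.gY n)"

lemma fY_vc: assumes c: "c \<in> P" and i: "i \<le> d" shows "fY (Gs.vc i c) = vx (p c) i"
proof -
  let ?c' = "SOME c'. c' \<in> P \<and> Gs.vc i c' = Gs.vc i c"
  have "\<exists>c'. c' \<in> P \<and> Gs.vc i c' = Gs.vc i c" using c by blast
  hence c': "?c' \<in> P \<and> Gs.vc i ?c' = Gs.vc i c" by (rule someI_ex)
  have r: "Gs.rel ({..d} - {i}) c ?c'" using Gs.vc_inj[OF c _ c'[THEN conjunct2, symmetric]] c' by blast
  have "{i} \<inter> ({..d} - {i}) = {}" by blast
  from rel_fc[OF _ c r this] have "Xo.verts (p ?c') {i} = Xo.verts (p c) {i}" by blast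
  hence "vx (p ?c') i = vx (p c) i" using vx_single pP c c'[THEN conjunct1] i by (metis singleton_inject)
  thus ?thesis unfolding fY_def by simp
qed

lemma fY_cell: assumes J: "J \<subseteq> {..d}" and c: "c \<in> P" shows "fY ` Gs.cellY J c = Xo.verts (p c) ({..d} - J)"
proof -
  have "fY ` Gs.cellY J c = (\<lambda>i. fY (Gs.vc i c)) ` ({..d} - J)" unfolding Gs.cellY_def by (simp add: image_image)
  also have "\<dots> = vx (p c) ` ({..d} - J)" using fY_vc[OF c] by (intro image_cong) auto
  also have "\<dots> = Xo.verts (p c) ({..d} - J)" using verts_vx[OF pP[OF c]] by simp
  finally show ?thesis .
qed

lemma pi_mc: assumes "a \<in> multicells Gs.Y" shows "\<pi> a \<in> multicells X"
proof -
  obtain J c where Jc: "J \<subseteq> {..d}" "c \<in> P" "a = Gs.mcY J c" using Gs.mc_char[OF assms] by blast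
  show ?thesis using pi_mcY[OF Jc(1,2)] Jc(3) Xo.fc_mc[OF pP[OF Jc(2)]] by simp
qed

lemma pi_morphism: "morphism d k Gs.Y Gs.gY Gs.\<omega>Y (Gs.mcY {} c0) X \<gamma> \<omega> a0 \<pi>"
  unfolding morphism_def
proof (intro conjI ballI allI impI)
  fix a assume "a \<in> multicells Gs.Y" thus "\<pi> a \<in> multicells X" by (rule pi_mc)
next
  show "\<exists>f. (\<forall>\<tau>\<in>cells Gs.Y. f ` \<tau> \<in> cells X) \<and> (\<forall>a\<in>multicells Gs.Y. fst (\<pi> a) = f ` fst a) \<and>
     (\<forall>a\<in>multicells Gs.Y. \<forall>\<sigma>. face1 \<sigma> (fst a) \<longrightarrow>
        \<pi> (\<sigma>, glue Gs.Y a \<sigma>) = (f ` \<sigma>, glue X (\<pi> a) (f ` \<sigma>)))"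
  proof (rule exI[of _ fY], intro conjI ballI allI impI)
    fix \<tau> assume "\<tau> \<in> cells Gs.Y"
    then obtain J c where Jc: "J \<subseteq> {..d}" "c \<in> P" "\<tau> = Gs.cellY J c" unfolding Gs.Y_simps Gs.CY_def by blast
    have "fY ` \<tau> \<subseteq> fst (p c)" using fY_cell[OF Jc(1,2)] Jc(3) Xo.verts_sub by simp
    thus "fY ` \<tau> \<in> cells X" using Xo.cell_sub Xo.ch_mc[OF pP[OF Jc(2)]] by blast
  next
    fix a assume "a \<in> multicells Gs.Y"
    then obtain J c where Jc: "J \<subseteq> {..d}" "c \<in> P" "a = Gs.mcY J c" using Gs.mc_char by blast
    show "fst (\<pi> a) = fY ` fst a" using pi_mcY[OF Jc(1,2)] fY_cell[OF Jc(1,2)] Jc(3) by simp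
  next
    fix a \<sigma> assume a: "a \<in> multicells Gs.Y" and f: "face1 \<sigma> (fst a)"
    obtain J c where Jc: "J \<subseteq> {..d}" "c \<in> P" "a = Gs.mcY J c" using Gs.mc_char[OF a] by blast
    have f': "face1 \<sigma> (Gs.cellY J c)" using f Jc(3) by simp
    obtain i where i: "i \<in> {..d} - J" "\<sigma> = Gs.cellY (insert i J) c" using Gs.face1_cellY[OF Jc(1) f'] by blast
    have iJ: "insert i J \<subseteq> {..d}" using i Jc(1) by blast
    have s: "\<sigma> \<subseteq> Gs.cellY J c" using f' unfolding face1_def by simp
    have "(\<sigma>, glue Gs.Y a \<sigma>) = Gs.mcY ({..d} - Gs.gY ` \<sigma>) c" using Gs.glue_mcY[OF Jc(1,2) s] Jc(3) by simp
    also have "{..d} - Gs.gY ` \<sigma> = insert i J" using i(2) Gs.cellY_J[OF iJ] by simp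
    finally have gl: "(\<sigma>, glue Gs.Y a \<sigma>) = Gs.mcY (insert i J) c" .
    have pc: "p c \<in> mcells_card X (d+1)" using pP[OF Jc(2)] .
    let ?V = "Xo.verts (p c) ({..d} - J)" and ?V' = "Xo.verts (p c) ({..d} - insert i J)"
    have fs: "fY ` \<sigma> = ?V'" using fY_cell[OF iJ Jc(2)] i(2) by simp
    have pa: "\<pi> a = Xo.fc (p c) ({..d} - J)" using pi_mcY[OF Jc(1,2)] Jc(3) by simp
    have pam: "\<pi> a \<in> multicells X" using pi_mc[OF a] .
    have sub: "?V' \<subseteq> ?V" unfolding Xo.verts_def by blast
    have cV: "card ?V = card ({..d} - J)" using Xo.verts_card[OF pc] by (simp add: Int_absorb2)
    have cV': "card ?V' = card ({..d} - insert i J)" using Xo.verts_card[OF pc] by (simp add: Int_absorb2)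
    have "card ({..d} - J) = card ({..d} - insert i J) + 1"
    proof -
      have e: "{..d} - J = insert i ({..d} - insert i J)" using i by blast
      have "card (insert i ({..d} - insert i J)) = Suc (card ({..d} - insert i J))"
        by (rule card_insert_disjoint) auto
      thus ?thesis unfolding e by simp
    qed
    hence "card ?V' + 1 = card ?V" using cV cV' by simp
    moreover have "finite ?V" using Xo.ch_fin[OF pc] Xo.verts_sub finite_subset by blast
    ultimately have f1: "face1 ?V' (fst (\<pi> a))" unfolding face1_def pa Xo.fst_fc using sub by simp
    have "gstep X (?V', glue X (\<pi> a) ?V') (\<pi> a)" unfolding gstep_def using pam f1 by auto
    hence "contained X (?V', glue X (\<pi> a) ?V') (p c)"
      using Xo.gstep_contained Xo.contained_trans Xo.fc_contained[OF pc] pa by metis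
    hence "Xo.face (p c) ?V' = (?V', glue X (\<pi> a) ?V')"
      using Xo.face_unique Xo.ch_mc[OF pc] by (metis fst_conv)
    moreover have "\<pi> (\<sigma>, glue Gs.Y a \<sigma>) = Xo.face (p c) ?V'"
      unfolding gl pi_mcY[OF iJ Jc(2)] Xo.fc_def ..
    ultimately show "\<pi> (\<sigma>, glue Gs.Y a \<sigma>) = (fY ` \<sigma>, glue X (\<pi> a) (fY ` \<sigma>))" using fs by simp
  qed
next
  show "\<pi> (Gs.mcY {} c0) = a0" using pi_mcY[of "{}" c0] Gs.c0P Xo.fc_all[OF pP[OF Gs.c0P]] p0 by simp
next
  fix a assume "a \<in> multicells Gs.Y"
  then obtain J c where Jc: "J \<subseteq> {..d}" "c \<in> P" "a = Gs.mcY J c" using Gs.mc_char by blast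
  have "\<gamma> ` fst (\<pi> a) = ({..d} - J) \<inter> {..d}" using pi_mcY[OF Jc(1,2)] Jc(3) Xo.verts_col[OF pP[OF Jc(2)]] by simp
  thus "\<gamma> ` fst (\<pi> a) = Gs.gY ` fst a" using Jc(3) Gs.gY_cell by auto
next
  fix b a l assume b: "b \<in> mcells_card Gs.Y d" and a: "a \<in> delta d Gs.Y b" and l: "l < k"
  obtain i x where ix: "i \<in> {..d}" "x \<in> P" "b = Gs.mcY {i} x" using Gs.pan_Y[OF b] by blast
  obtain y where y: "y \<in> Gs.res {i} x" "a = Gs.mcY {} y" using a Gs.delta_Y[OF ix(1,2)] ix(3) by blast
  have r: "Gs.rel {i} x y" using y unfolding Gs.res_def by simp
  have yP: "y \<in> P" using Gs.rel_P[of "{i}" x y] ix r by blast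
  have il: "i \<le> d" using ix by simp
  have syP: "st i l y \<in> P" using Gs.stP[OF il l yP] .
  have "\<pi> (Gs.\<omega>Y b l a) = \<pi> (Gs.mcY {} (st i l y))" using Gs.\<omega>Y_eq[OF ix(1,2) yP] ix(3) y(2) by simp
  also have "\<dots> = p (st i l y)" using pi_mcY[of "{}" "st i l y"] syP Xo.fc_all[OF pP[OF syP]] by simp
  also have "\<dots> = \<omega> (Xo.pan i (p y)) l (p y)" using peq[OF il l yP] unfolding Xo.act_def .
  finally have lhs: "\<pi> (Gs.\<omega>Y b l a) = \<omega> (Xo.pan i (p y)) l (p y)" .
  have pa: "\<pi> a = p y" using pi_mcY[of "{}" y] yP Xo.fc_all[OF pP[OF yP]] y(2) by simp
  have "\<pi> b = Xo.fc (p x) ({..d} - {i})" using pi_mcY[of "{i}" x] ix by simp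
  also have "\<dots> = Xo.fc (p y) ({..d} - {i})" using rel_fc[of "{i}" x y "{..d} - {i}"] ix r by auto
  finally have pb: "\<pi> b = Xo.pan i (p y)" unfolding Xo.pan_def .
  show "\<pi> (Gs.\<omega>Y b l a) = \<omega> (\<pi> b) l (\<pi> a)" using lhs pa pb by simp
qed

lemma pi_surj: "surjective_morphism Gs.Y X \<pi>"
  unfolding surjective_morphism_def
proof
  show "\<pi> ` multicells Gs.Y \<subseteq> multicells X" using pi_mc by blast
  show "multicells X \<subseteq> \<pi> ` multicells Gs.Y"
  proof
    fix m assume m: "m \<in> multicells X"
    obtain ch where ch: "ch \<in> mcells_card X (d+1)" "contained X m ch" using Xo.pu m unfolding pure_def by blast
    obtain c where c: "c \<in> P" "p c = ch" using p_surj[OF ch(1)] by blast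
    let ?T = "\<gamma> ` fst m"
    have ms: "fst m \<subseteq> fst ch" using Xo.contained_mc[OF ch(2)] Xo.ch_mc[OF ch(1)] by blast
    have T: "?T \<subseteq> {..d}" using Xo.ch_col[OF ch(1)] ms by blast
    have J: "{..d} - ?T \<subseteq> {..d}" by blast
    have "\<pi> (Gs.mcY ({..d} - ?T) c) = Xo.fc ch ?T" using pi_mcY[OF J c(1)] T c(2) by (simp add: double_diff)
    also have "\<dots> = Xo.face ch (fst m)" unfolding Xo.fc_def Xo.sub_verts[OF ch(1) ms] ..
    also have "\<dots> = m" using Xo.face_unique[OF _ ch(2)] Xo.ch_mc[OF ch(1)] by blast
    finally show "m \<in> \<pi> ` multicells Gs.Y" using Gs.mcY_in(1)[OF J c(1)] by (metis imageI)
  qed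
qed

end



theorem corollary8:
  fixes d k :: nat
    and X1 X2 :: mcomplex
    and \<gamma>1 \<gamma>2 :: "nat \<Rightarrow> nat"
    and \<omega>1 \<omega>2 :: "mcell \<Rightarrow> nat \<Rightarrow> mcell \<Rightarrow> mcell"
    and a1 a2 :: mcell
  assumes "1 \<le> d" and "1 \<le> k"
    and "obj d k X1 \<gamma>1 \<omega>1 a1" and "finite (multicells X1)"
    and "obj d k X2 \<gamma>2 \<omega>2 a2" and "finite (multicells X2)"
  shows "\<exists>Y \<gamma> \<omega> a \<pi>1 \<pi>2.
           obj d k Y \<gamma> \<omega> a \<and> finite (multicells Y) \<and> link_connected d Y \<and>
           morphism d k Y \<gamma> \<omega> a X1 \<gamma>1 \<omega>1 a1 \<pi>1 \<and> surjective_morphism Y X1 \<pi>1 \<and>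
           morphism d k Y \<gamma> \<omega> a X2 \<gamma>2 \<omega>2 a2 \<pi>2 \<and> surjective_morphism Y X2 \<pi>2"
proof -
  interpret X1: xobj d k X1 \<gamma>1 \<omega>1 a1 by unfold_locales (use assms in auto)
  interpret X2: xobj d k X2 \<gamma>2 \<omega>2 a2 by unfold_locales (use assms in auto)
  define st where "st i l z = (X1.act i l (fst z), X2.act i l (snd z))" for i l and z :: "mcell \<times> mcell"
  define R where "R = (\<lambda>x y. \<exists>i\<in>{..d}. \<exists>l<k. y = st i l x)"
  define P where "P = {z. R\<^sup>*\<^sup>* (a1, a2) z}"
  have PC: "fst z \<in> X1.CH \<and> snd z \<in> X2.CH" if "z \<in> P" for z
  proof -
    have "R\<^sup>*\<^sup>* (a1, a2) z" using that unfolding P_def by simp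
    thus ?thesis
    proof (induction rule: rtranclp_induct)
      case base then show ?case using X1.a0C X2.a0C by simp
    next
      case (step y z)
      then obtain i l where il: "i \<le> d" "l < k" "z = st i l y" unfolding R_def by blast
      thus ?case using X1.act_props[of "fst y" i l] X2.act_props[of "snd y" i l] step(3)
        unfolding st_def by simp
    qed
  qed
  have stP: "st i l x \<in> P" if "i \<le> d" "l < k" "x \<in> P" for i l x
  proof -
    have "R x (st i l x)" unfolding R_def using that by blast
    thus ?thesis using that(3) unfolding P_def by simp
  qed
  have finP: "finite P"
  proof -
    have "P \<subseteq> X1.CH \<times> X2.CH" using PC by (auto simp: mem_Times_iff)
    moreover have "finite X1.CH" "finite X2.CH" using assms(4,6) unfolding mcells_card_def by simp_all
    ultimately show ?thesis using finite_subset by blast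
  qed
  interpret G: gset d k P st "(a1, a2)"
  proof
    show "1 \<le> d" "1 \<le> k" using assms by auto
    show "finite P" by (rule finP)
    show "(a1, a2) \<in> P" unfolding P_def by simp
    show "\<And>i l x. i \<le> d \<Longrightarrow> l < k \<Longrightarrow> x \<in> P \<Longrightarrow> st i l x \<in> P" using stP by blast
    show "\<And>i x. i \<le> d \<Longrightarrow> x \<in> P \<Longrightarrow> st i 0 x = x"
      using PC X1.act_0 X2.act_0 unfolding st_def by simp
    show "\<And>i l l' x. i \<le> d \<Longrightarrow> l < k \<Longrightarrow> l' < k \<Longrightarrow> x \<in> P \<Longrightarrow>
               st i ((l + l') mod k) x = st i l (st i l' x)"
      using PC X1.act_comp X2.act_comp unfolding st_def by simp
    show "\<And>x. x \<in> P \<Longrightarrow> (\<lambda>x y. \<exists>i\<in>{..d}. \<exists>l<k. y = st i l x)\<^sup>*\<^sup>* (a1, a2) x"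
      unfolding P_def R_def by simp
  qed
  interpret M1: gmap d k P st "(a1, a2)" X1 \<gamma>1 \<omega>1 a1 fst
  proof
    show "\<And>x. x \<in> P \<Longrightarrow> fst x \<in> mcells_card X1 (d + 1)" using PC by blast
    show "fst (a1, a2) = a1" by simp
    show "\<And>i l x. i \<le> d \<Longrightarrow> l < k \<Longrightarrow> x \<in> P \<Longrightarrow> fst (st i l x) = X1.act i l (fst x)"
      unfolding st_def by simp
  qed
  interpret M2: gmap d k P st "(a1, a2)" X2 \<gamma>2 \<omega>2 a2 snd
  proof
    show "\<And>x. x \<in> P \<Longrightarrow> snd x \<in> mcells_card X2 (d + 1)" using PC by blast
    show "snd (a1, a2) = a2" by simp
    show "\<And>i l x. i \<le> d \<Longrightarrow> l < k \<Longrightarrow> x \<in> P \<Longrightarrow> snd (st i l x) = X2.act i l (snd x)"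
      unfolding st_def by simp
  qed
  show ?thesis
    using G.Y_obj G.Y_finite G.Y_link M1.pi_morphism M1.pi_surj M2.pi_morphism M2.pi_surj by blast
qed



end
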